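(* Let $n\geq 1$ and $\mathfrak g=sl(n+1,\mathbb C)$. For $(p,q)=(p_1,\dots,p_n,q_1,\dots,q_n)\in\mathbb C^{2n}$ let $$\Psi(p,q)=\begin{pmatrix}-\sum_{j=1}^n p_jq_j & q_1&\cdots&q_n\\ -p_1\sum_{j=1}^n p_jq_j & p_1q_1&\cdots&p_1q_n\\ \vdots&\vdots&&\vdots\\ -p_n\sum_{j=1}^n p_jq_j& p_nq_1&\cdots&p_nq_n\end{pmatrix},$$ and for $X\in\mathfrak g$ let $\tilde X\in\mathbb C[p,q]$ be the polynomial $\tilde X(p,q)=\operatorname{Tr}(\Psi(p,q)X)$. Then: (1) for all $X,Y\in\mathfrak g$, $[\tilde X,\tilde Y]_\ast=\{\tilde X,\tilde Y\}=\widetilde{[X,Y]}$; (2) the map $\rho_0:X\mapsto W(i\tilde X)$ is a representation of $\mathfrak g$ on $\mathcal P$, i.e. $\rho_0$ is linear and $\rho_0([X,Y])=\rho_0(X)\rho_0(Y)-\rho_0(Y)\rho_0(X)$ for all $X,Y\in\mathfrak g$.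
   Context: Write $x=(x_1,\dots,x_{2n})=(p_1,\dots,p_n,q_1,\dots,q_n)$ and let $\Lambda^{ij}$ ($1\le i,j\le 2n$) be given by $\Lambda^{k,n+k}=1$, $\Lambda^{n+k,k}=-1$ for $1\le k\le n$, and $\Lambda^{ij}=0$ otherwise. For polynomials $u,v\in\mathbb C[p,q]$ set $P^0(u,v)=uv$ and for $l\ge1$, $P^l(u,v)=\sum \Lambda^{i_1j_1}\cdots\Lambda^{i_lj_l}\,\partial^l_{x_{i_1}\cdots x_{i_l}}u\;\partial^l_{x_{j_1}\cdots x_{j_l}}v$ (sum over all $i_1,\dots,i_l,j_1,\dots,j_l\in\{1,\dots,2n\}$). The Poisson bracket is $\{u,v\}=P^1(u,v)=\sum_{k=1}^n(\partial_{p_k}u\,\partial_{q_k}v-\partial_{q_k}u\,\partial_{p_k}v)$. The Moyal bracket (at parameter $t=-i/2$) is $[u,v]_\ast=\sum_{l\ge0}\frac{(-1/4)^l}{(2l+1)!}P^{2l+1}(u,v)$. $\mathcal P=\mathbb C[p_1,\dots,p_n]$ is the space of complex polynomials in $p$. The Weyl correspondence $W$ assigns to each polynomial in $(p,q)$ a linear operator on $\mathcal P$, defined by linearity from: for a polynomial $u(p)$ and a multi-index $\alpha\in\mathbb N^n$, $(W(u(p)q^\alpha)\varphi)(p)=\big(i\partial_s\big)^{\alpha}\big(u(p+\tfrac12 s)\varphi(p+s)\big)\big|_{s=0}$, where $s=(s_1,\dots,s_n)$ and $(i\partial_s)^\alpha=\prod_k (i\partial_{s_k})^{\alpha_k}$.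 *)

theory Defs
  imports Complex_Main "HOL-Analysis.Derivative" "HOL-Library.Poly_Mapping" "Jordan_Normal_Form.Matrix"
begin

text \<open>Variable index k < n stands for p_{k+1},
index n+k (k < n) stands for q_{k+1}.\<close>

type_synonym cpoly = "(nat \<Rightarrow>\<^sub>0 nat) \<Rightarrow>\<^sub>0 complex"

definition pvar :: "nat \<Rightarrow> cpoly" where
  "pvar i = Poly_Mapping.single (Poly_Mapping.single i 1) 1"

definition pconst :: "complex \<Rightarrow> cpoly" where
  "pconst c = Poly_Mapping.single 0 c"

definition peval :: "cpoly \<Rightarrow> (nat \<Rightarrow> complex) \<Rightarrow> complex" where
  "peval f x = (\<Sum>m\<in>Poly_Mapping.keys f. Poly_Mapping.lookup f m * (\<Prod>i\<in>Poly_Mapping.keys (m::nat \<Rightarrow>\<^sub>0 nat). x i ^ Poly_Mapping.lookup m i))"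

definition pd :: "nat \<Rightarrow> ((nat \<Rightarrow> complex) \<Rightarrow> complex) \<Rightarrow> (nat \<Rightarrow> complex) \<Rightarrow> complex" where
  "pd i u x = deriv (\<lambda>t. u (x(i := t))) (x i)"

fun pdl :: "nat list \<Rightarrow> ((nat \<Rightarrow> complex) \<Rightarrow> complex) \<Rightarrow> (nat \<Rightarrow> complex) \<Rightarrow> complex" where
  "pdl [] u = u"
| "pdl (i # is) u = pd i (pdl is u)"

definition Lam :: "nat \<Rightarrow> nat \<Rightarrow> nat \<Rightarrow> complex" where
  "Lam n i j = (if i < n \<and> j = n + i then 1 else if j < n \<and> i = n + j then -1 else 0)"

definition Pl :: "nat \<Rightarrow> nat \<Rightarrow> ((nat \<Rightarrow> complex) \<Rightarrow> complex) \<Rightarrow> ((nat \<Rightarrow> complex) \<Rightarrow> complex)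
    \<Rightarrow> (nat \<Rightarrow> complex) \<Rightarrow> complex" where
  "Pl n l u v x = (\<Sum>is\<in>{xs. set xs \<subseteq> {..<2*n} \<and> length xs = l}.
                   \<Sum>js\<in>{xs. set xs \<subseteq> {..<2*n} \<and> length xs = l}.
                     (\<Prod>r<l. Lam n (is ! r) (js ! r)) * pdl is u x * pdl js v x)"

definition poisson :: "nat \<Rightarrow> ((nat \<Rightarrow> complex) \<Rightarrow> complex) \<Rightarrow> ((nat \<Rightarrow> complex) \<Rightarrow> complex)
    \<Rightarrow> (nat \<Rightarrow> complex) \<Rightarrow> complex" where
  "poisson n u v x = (\<Sum>k<n. pd k u x * pd (n + k) v x - pd (n + k) u x * pd k v x)"

definition moyal :: "nat \<Rightarrow> ((nat \<Rightarrow> complex) \<Rightarrow> complex) \<Rightarrow> ((nat \<Rightarrow> complex) \<Rightarrow> complex)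
    \<Rightarrow> (nat \<Rightarrow> complex) \<Rightarrow> complex" where
  "moyal n u v x = suminf (\<lambda>l::nat. (-1/4 :: complex) ^ l / fact (2*l+1) * Pl n (2*l+1) u v x)"

definition Pspace :: "nat \<Rightarrow> ((nat \<Rightarrow> complex) \<Rightarrow> complex) set" where
  "Pspace n = {peval f | f. \<forall>m\<in>Poly_Mapping.keys f. \<forall>i\<in>Poly_Mapping.keys m. i < n}"

text \<open>Multi-index alpha of the q-part of a monomial, as a list of differentiation indices.\<close>
definition qalpha :: "nat \<Rightarrow> (nat \<Rightarrow>\<^sub>0 nat) \<Rightarrow> nat list" where
  "qalpha n m = concat (map (\<lambda>k. replicate (Poly_Mapping.lookup m (n + k)) k) [0..<n])"

text \<open>W(u(p) q^alpha) phi (p) = (i d_s)^alpha (u(p + s/2) phi(p + s)) at s = 0,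
  extended linearly over the monomials (with u(p) = p^beta).\<close>
definition Weyl :: "nat \<Rightarrow> cpoly \<Rightarrow> ((nat \<Rightarrow> complex) \<Rightarrow> complex) \<Rightarrow> (nat \<Rightarrow> complex) \<Rightarrow> complex" where
  "Weyl n f \<phi> p = (\<Sum>m\<in>Poly_Mapping.keys f. Poly_Mapping.lookup f m *
      \<i> ^ length (qalpha n m) *
      pdl (qalpha n m)
        (\<lambda>s. (\<Prod>k<n. (p k + s k / 2) ^ Poly_Mapping.lookup m k) * \<phi> (\<lambda>k. p k + s k)) (\<lambda>_. 0))"

definition sl :: "nat \<Rightarrow> complex mat set" where
  "sl n = {X. X \<in> carrier_mat (n+1) (n+1) \<and> (\<Sum>i\<le>n. X $$ (i, i)) = 0}"

definition psum :: "nat \<Rightarrow> cpoly" where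
  "psum n = (\<Sum>j<n. pvar j * pvar (n + j))"

text \<open>Entries of Psi (0-based rows/columns 0..n); row/column index a >= 1 refers to p_a / q_a.\<close>
definition Psi :: "nat \<Rightarrow> nat \<Rightarrow> nat \<Rightarrow> cpoly" where
  "Psi n a b =
     (if a = 0 \<and> b = 0 then - psum n
      else if a = 0 then pvar (n + (b - 1))
      else if b = 0 then - (pvar (a - 1) * psum n)
      else pvar (a - 1) * pvar (n + (b - 1)))"

definition tilde :: "nat \<Rightarrow> complex mat \<Rightarrow> cpoly" where
  "tilde n X = (\<Sum>a\<le>n. \<Sum>b\<le>n. Psi n a b * pconst (X $$ (b, a)))"

definition rho0 :: "nat \<Rightarrow> complex mat \<Rightarrow> ((nat \<Rightarrow> complex) \<Rightarrow> complex) \<Rightarrow> (nat \<Rightarrow> complex) \<Rightarrow> complex" where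
  "rho0 n X = Weyl n (pconst \<i> * tilde n X)"

end

theory Submission
  imports Defs
begin

type_synonym fn = "(nat \<Rightarrow> complex) \<Rightarrow> complex"

inductive polyV :: "nat set \<Rightarrow> fn \<Rightarrow> bool" for V where
  pc: "polyV V (\<lambda>x. c)"
| pv: "i \<in> V \<Longrightarrow> polyV V (\<lambda>x. x i)"
| padd: "polyV V f \<Longrightarrow> polyV V g \<Longrightarrow> polyV V (\<lambda>x. f x + g x)"
| pmul: "polyV V f \<Longrightarrow> polyV V g \<Longrightarrow> polyV V (\<lambda>x. f x * g x)"

lemma pd_eqI:
  assumes "\<And>x. ((\<lambda>t. f (x(i:=t))) has_field_derivative g x) (at (x i))"
  shows "pd i f = g"
  using assms unfolding pd_def by (auto intro!: ext DERIV_imp_deriv)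

lemma polyV_pd_aux:
  assumes "polyV V f"
  shows "polyV V (pd i f) \<and> (\<forall>x. ((\<lambda>t. f (x(i:=t))) has_field_derivative pd i f x) (at (x i)))"
  using assms
proof induction
  case (pc c)
  have "pd i (\<lambda>x. c) = (\<lambda>x. 0)" by (rule pd_eqI) auto
  then show ?case by (auto intro: polyV.pc)
next
  case (pv j)
  have d: "((\<lambda>t. (x(i:=t)) j) has_field_derivative (if i = j then 1 else 0)) (at (x i))" for x
    by (cases "i = j") auto
  have "pd i (\<lambda>x. x j) = (\<lambda>x. if i = j then 1 else 0)" by (rule pd_eqI) (rule d)
  then show ?case using d by (auto intro: polyV.pc)
next
  case (padd f g)
  have d: "((\<lambda>t. f (x(i:=t)) + g (x(i:=t))) has_field_derivative pd i f x + pd i g x) (at (x i))" for x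
    using padd(3,4) by (intro DERIV_add) blast+
  have e: "pd i (\<lambda>x. f x + g x) = (\<lambda>x. pd i f x + pd i g x)" by (rule pd_eqI) (rule d)
  show ?case
  proof (rule conjI)
    show "polyV V (pd i (\<lambda>x. f x + g x))" unfolding e using padd by (auto intro: polyV.padd)
    show "\<forall>x. ((\<lambda>t. f (x(i := t)) + g (x(i := t))) has_field_derivative pd i (\<lambda>x. f x + g x) x) (at (x i))"
      unfolding e using d by blast
  qed
next
  case (pmul f g)
  have d: "((\<lambda>t. f (x(i:=t)) * g (x(i:=t))) has_field_derivative pd i f x * g x + pd i g x * f x) (at (x i))" for x
  proof -
    have "((\<lambda>t. f (x(i:=t))) has_field_derivative pd i f x) (at (x i))" using pmul(3) by blast
    moreover have "((\<lambda>t. g (x(i:=t))) has_field_derivative pd i g x) (at (x i))" using pmul(4) by blast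
    ultimately have "((\<lambda>t. f (x(i:=t)) * g (x(i:=t))) has_field_derivative pd i f x * g (x(i:=x i)) + pd i g x * f (x(i:=x i))) (at (x i))"
      by (rule DERIV_mult)
    then show ?thesis by simp
  qed
  have e: "pd i (\<lambda>x. f x * g x) = (\<lambda>x. pd i f x * g x + pd i g x * f x)" by (rule pd_eqI) (rule d)
  show ?case
  proof (rule conjI)
    show "polyV V (pd i (\<lambda>x. f x * g x))" unfolding e using pmul by (auto intro: polyV.padd polyV.pmul)
    show "\<forall>x. ((\<lambda>t. f (x(i := t)) * g (x(i := t))) has_field_derivative pd i (\<lambda>x. f x * g x) x) (at (x i))"
      unfolding e using d by blast
  qed
qed

lemma polyV_pd: "polyV V f \<Longrightarrow> polyV V (pd i f)"
  using polyV_pd_aux by blast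

lemma polyV_deriv: "polyV V f \<Longrightarrow> ((\<lambda>t. f (x(i:=t))) has_field_derivative pd i f x) (at (x i))"
  using polyV_pd_aux by blast

lemma pd_const[simp]: "pd i (\<lambda>x. c) = (\<lambda>x. 0)" by (rule pd_eqI) auto

lemma pd_var: "pd i (\<lambda>x. x j) = (\<lambda>x. if i = j then 1 else 0)"
  by (rule pd_eqI) (cases "i = j"; auto)

lemma pd_add: "polyV V f \<Longrightarrow> polyV V g \<Longrightarrow> pd i (\<lambda>x. f x + g x) = (\<lambda>x. pd i f x + pd i g x)"
  by (rule pd_eqI) (auto intro!: DERIV_add polyV_deriv)

lemma pd_mul: "polyV V f \<Longrightarrow> polyV V g \<Longrightarrow> pd i (\<lambda>x. f x * g x) = (\<lambda>x. pd i f x * g x + f x * pd i g x)"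
  apply (rule pd_eqI)
  subgoal for x
    using DERIV_mult[of "\<lambda>t. f (x(i:=t))" "pd i f x" "x i" UNIV "\<lambda>t. g (x(i:=t))" "pd i g x"]
    by (auto intro: polyV_deriv simp: mult.commute)
  done

lemma polyV_sum: "finite A \<Longrightarrow> (\<And>a. a \<in> A \<Longrightarrow> polyV V (f a)) \<Longrightarrow> polyV V (\<lambda>x. \<Sum>a\<in>A. f a x)"
proof (induction A rule: finite_induct)
  case empty then show ?case using polyV.pc[of V 0] by simp
next
  case (insert a A) then show ?case by (auto intro: polyV.padd)
qed

lemma polyV_prod: "finite A \<Longrightarrow> (\<And>a. a \<in> A \<Longrightarrow> polyV V (f a)) \<Longrightarrow> polyV V (\<lambda>x. \<Prod>a\<in>A. f a x)"
proof (induction A rule: finite_induct)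
  case empty then show ?case using polyV.pc[of V 1] by simp
next
  case (insert a A) then show ?case by (auto intro: polyV.pmul)
qed

lemma polyV_pow: "polyV V f \<Longrightarrow> polyV V (\<lambda>x. f x ^ k)"
proof (induction k)
  case 0 then show ?case using polyV.pc[of V 1] by simp
next
  case (Suc k) then show ?case by (auto intro: polyV.pmul)
qed

lemma polyV_minus: "polyV V f \<Longrightarrow> polyV V (\<lambda>x. - f x)"
  using polyV.pmul[OF polyV.pc[of V "-1"]] by fastforce

lemma polyV_diff: "polyV V f \<Longrightarrow> polyV V g \<Longrightarrow> polyV V (\<lambda>x. f x - g x)"
  using polyV.padd[OF _ polyV_minus] by fastforce

lemma pd_sum: "finite A \<Longrightarrow> (\<And>a. a \<in> A \<Longrightarrow> polyV V (f a)) \<Longrightarrow>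
   pd i (\<lambda>x. \<Sum>a\<in>A. f a x) = (\<lambda>x. \<Sum>a\<in>A. pd i (f a) x)"
proof (induction A rule: finite_induct)
  case empty then show ?case by simp
next
  case (insert a A)
  have "pd i (\<lambda>x. \<Sum>a\<in>insert a A. f a x) = pd i (\<lambda>x. f a x + (\<Sum>a\<in>A. f a x))"
    using insert by simp
  also have "\<dots> = (\<lambda>x. pd i (f a) x + pd i (\<lambda>x. \<Sum>a\<in>A. f a x) x)"
    by (rule pd_add[of V]) (use insert in \<open>auto intro: polyV_sum\<close>)
  finally show ?case using insert by simp
qed

lemma pd_cmul: "polyV V f \<Longrightarrow> pd i (\<lambda>x. c * f x) = (\<lambda>x. c * pd i f x)"
  using pd_mul[OF polyV.pc[of V c], of f i] by simp

lemma pd_minus: "polyV V f \<Longrightarrow> pd i (\<lambda>x. - f x) = (\<lambda>x. - pd i f x)"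
  using pd_cmul[of V f i "-1"] by simp

lemma pd_diff: "polyV V f \<Longrightarrow> polyV V g \<Longrightarrow> pd i (\<lambda>x. f x - g x) = (\<lambda>x. pd i f x - pd i g x)"
  using pd_add[OF _ polyV_minus, of V f g i] pd_minus[of V g i] by simp

lemma pd_swap: "polyV V f \<Longrightarrow> pd i (pd j f) = pd j (pd i f)"
proof (induction rule: polyV.induct)
  case (pc c) then show ?case by simp
next
  case (pv k) then show ?case by (simp add: pd_var)
next
  case (padd f g)
  then show ?case
    by (simp add: pd_add[OF padd(1,2)] pd_add[OF polyV_pd polyV_pd, OF padd(1,2)])
next
  case (pmul f g)
  have fs: "polyV V (pd j f)" "polyV V (pd i f)" "polyV V (pd j g)" "polyV V (pd i g)"
    using pmul by (auto intro: polyV_pd)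
  have "pd i (pd j (\<lambda>x. f x * g x)) = pd i (\<lambda>x. pd j f x * g x + f x * pd j g x)"
    by (simp add: pd_mul[OF pmul(1,2)])
  also have "\<dots> = (\<lambda>x. pd j (pd i f) x * g x + pd j f x * pd i g x + (pd i f x * pd j g x + f x * pd j (pd i g) x))"
    by (simp add: pd_add[of V] polyV.pmul pd_mul[of V] fs pmul)
  also have "\<dots> = pd j (pd i (\<lambda>x. f x * g x))"
    by (simp add: pd_mul[OF pmul(1,2)] pd_add[of V] polyV.pmul pd_mul[of V] fs pmul algebra_simps)
  finally show ?case .
qed

definition pmon :: "(nat \<Rightarrow>\<^sub>0 nat) \<Rightarrow> (nat \<Rightarrow> complex) \<Rightarrow> complex" where
  "pmon m x = (\<Prod>i\<in>Poly_Mapping.keys m. x i ^ Poly_Mapping.lookup m i)"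

lemma mono_superset:
  assumes "finite S" "Poly_Mapping.keys m \<subseteq> S"
  shows "pmon m x = (\<Prod>i\<in>S. x i ^ Poly_Mapping.lookup m i)"
  unfolding pmon_def
  by (rule prod.mono_neutral_left) (use assms in \<open>auto simp: in_keys_iff\<close>)

lemma mono_add: "pmon (m1 + m2) x = pmon m1 x * pmon m2 x"
proof -
  let ?S = "Poly_Mapping.keys m1 \<union> Poly_Mapping.keys m2"
  have "pmon (m1 + m2) x = (\<Prod>i\<in>?S. x i ^ Poly_Mapping.lookup (m1 + m2) i)"
    by (rule mono_superset) (auto simp: keys_add)
  also have "\<dots> = (\<Prod>i\<in>?S. x i ^ Poly_Mapping.lookup m1 i) * (\<Prod>i\<in>?S. x i ^ Poly_Mapping.lookup m2 i)"
    by (simp add: lookup_add power_add prod.distrib)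
  also have "\<dots> = pmon m1 x * pmon m2 x"
    by (subst (1 2) mono_superset[of ?S]) auto
  finally show ?thesis .
qed

lemma mono_zero[simp]: "pmon 0 x = 1" by (simp add: pmon_def)

lemma mono_single[simp]: "pmon (Poly_Mapping.single i k) x = x i ^ k"
  by (simp add: pmon_def)

definition lin :: "((nat \<Rightarrow>\<^sub>0 nat) \<Rightarrow> complex) \<Rightarrow> cpoly \<Rightarrow> complex" where
  "lin h f = (\<Sum>m\<in>Poly_Mapping.keys f. Poly_Mapping.lookup f m * h m)"

lemma lin_superset:
  assumes "finite S" "Poly_Mapping.keys f \<subseteq> S"
  shows "lin h f = (\<Sum>m\<in>S. Poly_Mapping.lookup f m * h m)"
  unfolding lin_def
  by (rule sum.mono_neutral_left) (use assms in \<open>auto simp: in_keys_iff\<close>)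

lemma lin_add: "lin h (f + g) = lin h f + lin h g"
proof -
  let ?S = "Poly_Mapping.keys f \<union> Poly_Mapping.keys g"
  have "lin h (f + g) = (\<Sum>m\<in>?S. Poly_Mapping.lookup (f + g) m * h m)"
    by (rule lin_superset) (auto simp: keys_add)
  also have "\<dots> = (\<Sum>m\<in>?S. Poly_Mapping.lookup f m * h m) + (\<Sum>m\<in>?S. Poly_Mapping.lookup g m * h m)"
    by (simp add: lookup_add distrib_right sum.distrib)
  also have "\<dots> = lin h f + lin h g"
    by (subst (1 2) lin_superset[of ?S]) auto
  finally show ?thesis .
qed

lemma lin_zero[simp]: "lin h 0 = 0" by (simp add: lin_def)

lemma lin_single[simp]: "lin h (Poly_Mapping.single m c) = c * h m"
  by (simp add: lin_def)

lemma lin_uminus: "lin h (- f) = - lin h f"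
  by (simp add: lin_def sum_negf)

lemma lin_diff: "lin h (f - g) = lin h f - lin h g"
  using lin_add[of h f "- g"] lin_uminus[of h g] by simp

lemma lin_sum: "lin h (\<Sum>i\<in>I. f i) = (\<Sum>i\<in>I. lin h (f i))"
proof (induction I rule: infinite_finite_induct)
  case (infinite A) then show ?case by simp
next
  case empty then show ?case by simp
next
  case (insert a A) then show ?case by (simp add: lin_add)
qed

lemma poly_rep: "f = (\<Sum>m\<in>Poly_Mapping.keys f. Poly_Mapping.single m (Poly_Mapping.lookup f m))"
  by (rule poly_mapping_eqI)
     (auto simp: lookup_sum lookup_single when_def in_keys_iff sum.delta' )

lemma lin_mult:
  assumes h: "\<And>m1 m2. h (m1 + m2) = h m1 * h m2"
  shows "lin h (f * g) = lin h f * lin h g"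
proof -
  have "f * g = (\<Sum>a\<in>Poly_Mapping.keys f. \<Sum>b\<in>Poly_Mapping.keys g.
      Poly_Mapping.single a (Poly_Mapping.lookup f a) * Poly_Mapping.single b (Poly_Mapping.lookup g b))"
    by (subst (1) poly_rep, subst (1) poly_rep[of g]) (simp add: sum_product)
  then have "lin h (f * g) = (\<Sum>a\<in>Poly_Mapping.keys f. \<Sum>b\<in>Poly_Mapping.keys g.
       Poly_Mapping.lookup f a * Poly_Mapping.lookup g b * h (a + b))"
    by (simp add: lin_sum mult_single)
  also have "\<dots> = lin h f * lin h g"
    by (simp add: lin_def h sum_product algebra_simps)
  finally show ?thesis .
qed

lemma peval_lin: "peval f x = lin (\<lambda>m. pmon m x) f"
  by (simp add: peval_def lin_def pmon_def)

lemma peval_add: "peval (f + g) = (\<lambda>x. peval f x + peval g x)"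
  by (rule ext) (simp add: peval_lin lin_add)

lemma peval_mult: "peval (f * g) = (\<lambda>x. peval f x * peval g x)"
  by (rule ext) (simp add: peval_lin lin_mult mono_add)

lemma peval_uminus: "peval (- f) = (\<lambda>x. - peval f x)"
  by (rule ext) (simp add: peval_lin lin_uminus)

lemma peval_sum: "peval (\<Sum>i\<in>I. f i) = (\<lambda>x. \<Sum>i\<in>I. peval (f i) x)"
  by (rule ext) (simp add: peval_lin lin_sum)

lemma peval_pconst: "peval (pconst c) = (\<lambda>x. c)"
  by (rule ext) (simp add: peval_lin pconst_def)

lemma peval_pvar: "peval (pvar i) = (\<lambda>x. x i)"
  by (rule ext) (simp add: peval_lin pvar_def)

lemma polyV_peval:
  assumes "\<forall>m\<in>Poly_Mapping.keys f. \<forall>i\<in>Poly_Mapping.keys m. i \<in> V"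
  shows "polyV V (peval f)"
proof -
  have "peval f = (\<lambda>x. \<Sum>m\<in>Poly_Mapping.keys f. Poly_Mapping.lookup f m *
       (\<Prod>i\<in>Poly_Mapping.keys m. x i ^ Poly_Mapping.lookup m i))"
    by (simp add: peval_def fun_eq_iff)
  moreover have "polyV V (\<lambda>x. \<Sum>m\<in>Poly_Mapping.keys f. Poly_Mapping.lookup f m *
       (\<Prod>i\<in>Poly_Mapping.keys m. x i ^ Poly_Mapping.lookup m i))"
    using assms by (auto intro!: polyV_sum polyV_prod polyV_pow polyV.pmul polyV.pc polyV.pv)
  ultimately show ?thesis by simp
qed

lemma Pspace_polyV: "\<phi> \<in> Pspace n \<Longrightarrow> polyV {..<n} \<phi>"
  unfolding Pspace_def by (auto intro!: polyV_peval)

lemma polyV_Pspace: "polyV {..<n} g \<Longrightarrow> g \<in> Pspace n"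
proof (induction rule: polyV.induct)
  case (pc c)
  show ?case unfolding Pspace_def
    by (rule CollectI, rule exI[of _ "pconst c"]) (simp add: peval_pconst, simp add: pconst_def)
next
  case (pv i)
  show ?case unfolding Pspace_def
    by (rule CollectI, rule exI[of _ "pvar i"]) (simp add: peval_pvar, use pv in \<open>simp add: pvar_def\<close>)
next
  case (padd f g)
  from padd obtain a b where a: "f = peval a" "\<forall>m\<in>Poly_Mapping.keys a. \<forall>i\<in>Poly_Mapping.keys m. i < n"
    and b: "g = peval b" "\<forall>m\<in>Poly_Mapping.keys b. \<forall>i\<in>Poly_Mapping.keys m. i < n"
    unfolding Pspace_def by auto
  show ?case unfolding Pspace_def
    by (rule CollectI, rule exI[of _ "a + b"]) (use a b keys_add[of a b] in \<open>auto simp: peval_add\<close>)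
next
  case (pmul f g)
  from pmul obtain a b where a: "f = peval a" "\<forall>m\<in>Poly_Mapping.keys a. \<forall>i\<in>Poly_Mapping.keys m. i < n"
    and b: "g = peval b" "\<forall>m\<in>Poly_Mapping.keys b. \<forall>i\<in>Poly_Mapping.keys m. i < n"
    unfolding Pspace_def by auto
  have "\<forall>m\<in>Poly_Mapping.keys (a * b). \<forall>i\<in>Poly_Mapping.keys m. i < n"
  proof (intro ballI)
    fix m i assume m: "m \<in> Poly_Mapping.keys (a * b)" and i: "i \<in> Poly_Mapping.keys m"
    from m keys_mult[of a b] obtain u v where "m = u + v" "u \<in> Poly_Mapping.keys a" "v \<in> Poly_Mapping.keys b"
      by blast
    with i keys_add[of u v] a b show "i < n" by blast
  qed
  then show ?case unfolding Pspace_def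
    by (intro CollectI exI[of _ "a * b"]) (use a b in \<open>auto simp: peval_mult\<close>)
qed

definition Pf :: "nat \<Rightarrow> fn" where "Pf a x = (if a = 0 then 1 else x (a - 1))"
definition Sf :: "nat \<Rightarrow> fn" where "Sf n x = (\<Sum>j<n. x j * x (n + j))"
definition Qf :: "nat \<Rightarrow> nat \<Rightarrow> fn" where "Qf n b x = (if b = 0 then - Sf n x else x (n + (b - 1)))"

lemma polyV_Pf: "polyV UNIV (Pf a)"
  by (cases "a = 0") (auto simp: Pf_def[abs_def] intro: polyV.pc polyV.pv)

lemma polyV_Sf: "polyV UNIV (Sf n)"
  unfolding Sf_def[abs_def] by (auto intro!: polyV_sum polyV.pmul polyV.pv)

lemma polyV_Qf: "polyV UNIV (Qf n b)"
proof (cases "b = 0")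
  case True
  then have "Qf n b = (\<lambda>x. - Sf n x)" by (auto simp: Qf_def[abs_def])
  then show ?thesis using polyV_minus[OF polyV_Sf] by simp
next
  case False
  then have "Qf n b = (\<lambda>x. x (n + (b - 1)))" by (auto simp: Qf_def[abs_def])
  then show ?thesis by (simp add: polyV.pv)
qed

lemma pd_Pf: "pd i (Pf a) = (\<lambda>x. if a = Suc i then 1 else 0)"
proof (cases "a = 0")
  case True
  then have "Pf a = (\<lambda>x. 1)" by (auto simp: Pf_def[abs_def])
  then show ?thesis using True by simp
next
  case False
  then have "Pf a = (\<lambda>x. x (a - 1))" by (auto simp: Pf_def[abs_def])
  then show ?thesis using False by (auto simp: pd_var)
qed

lemma pd_Sf: "pd i (Sf n) = (\<lambda>x. \<Sum>j<n. (if i = j then 1 else 0) * x (n + j) + x j * (if i = n + j then 1 else 0))"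
  unfolding Sf_def[abs_def]
  by (subst pd_sum[of _ UNIV]) (auto intro!: polyV.pmul polyV.pv simp: pd_mul[of UNIV] polyV.pv pd_var)

lemma pd_Sf_p: "k < n \<Longrightarrow> pd k (Sf n) x = x (n + k)"
  by (simp add: pd_Sf sum.distrib if_distrib if_distribR sum.delta cong: if_cong)

lemma pd_Sf_q: "k < n \<Longrightarrow> pd (n + k) (Sf n) x = x k"
  by (simp add: pd_Sf sum.distrib if_distrib if_distribR sum.delta' cong: if_cong)

lemma pd_Qf: "pd i (Qf n b) = (\<lambda>x. if b = 0 then - pd i (Sf n) x else if i = n + (b - 1) then 1 else 0)"
proof (cases "b = 0")
  case True
  then have "Qf n b = (\<lambda>x. - Sf n x)" by (auto simp: Qf_def[abs_def])
  then show ?thesis using True by (simp add: pd_minus[OF polyV_Sf])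
next
  case False
  then have "Qf n b = (\<lambda>x. x (n + (b - 1)))" by (auto simp: Qf_def[abs_def])
  then show ?thesis using False by (auto simp: pd_var)
qed

lemma pd_Qf_p: "k < n \<Longrightarrow> b \<le> n \<Longrightarrow> pd k (Qf n b) x = (if b = 0 then - x (n + k) else 0)"
  by (auto simp: pd_Qf pd_Sf_p)

lemma pd_Qf_q: "k < n \<Longrightarrow> b \<le> n \<Longrightarrow> pd (n + k) (Qf n b) x = (if b = 0 then - x k else if b = Suc k then 1 else 0)"
  by (auto simp: pd_Qf pd_Sf_q)

lemma pd_Pf_q: "k < n \<Longrightarrow> a \<le> n \<Longrightarrow> pd (n + k) (Pf a) x = 0"
  by (auto simp: pd_Pf)

lemma pd_Pf_p: "pd k (Pf a) x = (if a = Suc k then 1 else 0)"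
  by (auto simp: pd_Pf)

lemma ifmul1[simp]: "(if P then 1 else 0) * (y::complex) = (if P then y else 0)" by simp
lemma ifmul2[simp]: "(y::complex) * (if P then 1 else 0) = (if P then y else 0)" by simp

lemma sum_if_suc[simp]: "(\<Sum>k<n. if a = Suc k then f k else 0) = (if 0 < a \<and> a \<le> n then f (a - 1) else 0)"
  by (cases a) (auto simp: sum.delta)

lemma poisson_antisym: "poisson n f g x = - poisson n g f x"
  unfolding poisson_def by (simp add: sum_negf[symmetric] algebra_simps)

lemma poisson_Pf_Pf: "a \<le> n \<Longrightarrow> c \<le> n \<Longrightarrow> poisson n (Pf a) (Pf c) x = 0"
  unfolding poisson_def by (simp add: pd_Pf_q)

lemma poisson_Pf_Qf: "a \<le> n \<Longrightarrow> d \<le> n \<Longrightarrow>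
  poisson n (Pf a) (Qf n d) x = (if a = d then 1 else 0) - (if d = 0 then Pf a x else 0)"
  unfolding poisson_def
  by (cases "d = 0") (auto simp: pd_Pf_q pd_Qf_q pd_Pf_p sum_negf Pf_def)

lemma poisson_Qf_Qf: "b \<le> n \<Longrightarrow> d \<le> n \<Longrightarrow>
  poisson n (Qf n b) (Qf n d) x = (if d = 0 then Qf n b x else 0) - (if b = 0 then Qf n d x else 0)"
  unfolding poisson_def
  by (cases "d = 0"; cases "b = 0") (auto simp: pd_Qf_q pd_Qf_p sum_negf Qf_def mult.commute)

lemma poisson_mult_left:
  assumes "polyV V f" "polyV V g"
  shows "poisson n (\<lambda>x. f x * g x) h x = f x * poisson n g h x + g x * poisson n f h x"
  unfolding poisson_def sum_distrib_left sum.distrib[symmetric]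
  by (rule sum.cong) (auto simp: pd_mul[OF assms] algebra_simps)

lemma poisson_mult_right:
  assumes "polyV V f" "polyV V g"
  shows "poisson n h (\<lambda>x. f x * g x) x = f x * poisson n h g x + g x * poisson n h f x"
proof -
  have "poisson n h (\<lambda>x. f x * g x) x = - poisson n (\<lambda>x. f x * g x) h x" by (rule poisson_antisym)
  also have "\<dots> = -(f x * poisson n g h x + g x * poisson n f h x)" using poisson_mult_left[OF assms] by simp
  also have "\<dots> = f x * poisson n h g x + g x * poisson n h f x"
    by (simp add: poisson_antisym[of n g h x] poisson_antisym[of n f h x])
  finally show ?thesis .
qed

definition psi :: "nat \<Rightarrow> nat \<Rightarrow> nat \<Rightarrow> fn" where "psi n a b x = Pf a x * Qf n b x"

lemma polyV_psi: "polyV UNIV (psi n a b)"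
  unfolding psi_def[abs_def] by (intro polyV.pmul polyV_Pf polyV_Qf)

lemma poisson_psi:
  assumes "a \<le> n" "b \<le> n" "c \<le> n" "d \<le> n"
  shows "poisson n (psi n a b) (psi n c d) x = (if a = d then psi n c b x else 0) - (if b = c then psi n a d x else 0)"
proof -
  have "poisson n (psi n a b) (psi n c d) x =
     Pf a x * (Pf c x * poisson n (Qf n b) (Qf n d) x + Qf n d x * poisson n (Qf n b) (Pf c) x)
   + Qf n b x * (Pf c x * poisson n (Pf a) (Qf n d) x + Qf n d x * poisson n (Pf a) (Pf c) x)"
    unfolding psi_def[abs_def]
    by (simp add: poisson_mult_left[OF polyV_Pf polyV_Qf] poisson_mult_right[OF polyV_Pf polyV_Qf])
  also have "\<dots> = (if a = d then psi n c b x else 0) - (if b = c then psi n a d x else 0)"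
    using assms
    by (simp add: poisson_antisym[of n "Qf n b" "Pf c"] poisson_Pf_Qf poisson_Qf_Qf poisson_Pf_Pf psi_def)
       (auto simp: algebra_simps)
  finally show ?thesis .
qed

lemma poisson_sum_left:
  assumes "finite A" "\<And>a. a \<in> A \<Longrightarrow> polyV V (f a)"
  shows "poisson n (\<lambda>x. \<Sum>a\<in>A. f a x) g x = (\<Sum>a\<in>A. poisson n (f a) g x)"
  unfolding poisson_def
  by (simp add: pd_sum[OF assms] sum_distrib_right sum_subtractf[symmetric])
     (subst sum.swap, simp)

lemma poisson_const_left[simp]: "poisson n (\<lambda>x. c) g x = 0"
  unfolding poisson_def by simp

lemma poisson_cmul_left:
  assumes "polyV V f"
  shows "poisson n (\<lambda>x. f x * c) g x = poisson n f g x * c"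
  using poisson_mult_left[OF assms polyV.pc, of n c g x] by simp

lemma poisson_sum_right:
  assumes "finite A" "\<And>a. a \<in> A \<Longrightarrow> polyV V (f a)"
  shows "poisson n g (\<lambda>x. \<Sum>a\<in>A. f a x) x = (\<Sum>a\<in>A. poisson n g (f a) x)"
  using poisson_sum_left[OF assms, where n=n and g=g and x=x] poisson_antisym[of n g "\<lambda>x. \<Sum>a\<in>A. f a x" x]
    poisson_antisym[of n g "f a" x for a]
  by (simp add: sum_negf)

lemma poisson_cmul_right:
  assumes "polyV V f"
  shows "poisson n g (\<lambda>x. f x * c) x = poisson n g f x * c"
  using poisson_cmul_left[OF assms, where c=c and n=n and g=g and x=x] poisson_antisym[of n g "\<lambda>x. f x * c" x]
    poisson_antisym[of n g f x]
  by simp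

definition TT :: "nat \<Rightarrow> complex mat \<Rightarrow> fn" where
  "TT n X x = (\<Sum>a\<le>n. \<Sum>b\<le>n. psi n a b x * X $$ (b, a))"

lemma polyV_TT: "polyV UNIV (TT n X)"
  unfolding TT_def[abs_def] by (intro polyV_sum polyV.pmul polyV_psi polyV.pc) auto

lemma poisson_TT:
  "poisson n (TT n X) (TT n Y) x = (\<Sum>a\<le>n. \<Sum>b\<le>n. (\<Sum>c\<le>n. \<Sum>d\<le>n.
       ((if a = d then psi n c b x else 0) - (if b = c then psi n a d x else 0)) * Y $$ (d, c)) * X $$ (b, a))"
proof -
  have pi: "polyV UNIV (\<lambda>x. \<Sum>b\<le>n. psi n a b x * X $$ (b, a))" for a X
    by (intro polyV_sum polyV.pmul polyV_psi polyV.pc) auto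
  have pj: "polyV UNIV (\<lambda>x. psi n a b x * X $$ (b, a))" for a b X
    by (intro polyV.pmul polyV_psi polyV.pc)
  have "poisson n (TT n X) (TT n Y) x = (\<Sum>a\<le>n. \<Sum>b\<le>n. (\<Sum>c\<le>n. \<Sum>d\<le>n.
       poisson n (psi n a b) (psi n c d) x * Y $$ (d, c)) * X $$ (b, a))"
    unfolding TT_def[abs_def]
    by (simp add: poisson_sum_left[OF _ pi] poisson_sum_left[OF _ pj] poisson_cmul_left[OF polyV_psi]
        poisson_sum_right[OF _ pi] poisson_sum_right[OF _ pj] poisson_cmul_right[OF polyV_psi]
        poisson_cmul_right[OF polyV_TT[unfolded TT_def[abs_def]]])
  also have "\<dots> = (\<Sum>a\<le>n. \<Sum>b\<le>n. (\<Sum>c\<le>n. \<Sum>d\<le>n.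
       ((if a = d then psi n c b x else 0) - (if b = c then psi n a d x else 0)) * Y $$ (d, c)) * X $$ (b, a))"
    by (intro sum.cong refl) (simp add: poisson_psi)
  finally show ?thesis .
qed

lemma sum3_rev: "(\<Sum>a\<in>A. \<Sum>b\<in>B. \<Sum>c\<in>C. f a b c) = (\<Sum>c\<in>C. \<Sum>b\<in>B. \<Sum>a\<in>A. f a b c)"
proof -
  have "(\<Sum>a\<in>A. \<Sum>b\<in>B. \<Sum>c\<in>C. f a b c) = (\<Sum>b\<in>B. \<Sum>a\<in>A. \<Sum>c\<in>C. f a b c)" by (rule sum.swap)
  also have "\<dots> = (\<Sum>b\<in>B. \<Sum>c\<in>C. \<Sum>a\<in>A. f a b c)" by (rule sum.cong[OF refl], rule sum.swap)
  also have "\<dots> = (\<Sum>c\<in>C. \<Sum>b\<in>B. \<Sum>a\<in>A. f a b c)" by (rule sum.swap)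
  finally show ?thesis .
qed

lemma mat_mult_idx:
  fixes X Y :: "complex mat"
  assumes "X \<in> carrier_mat (n+1) (n+1)" "Y \<in> carrier_mat (n+1) (n+1)" "b \<le> n" "a \<le> n"
  shows "(X * Y) $$ (b, a) = (\<Sum>c\<le>n. X $$ (b, c) * Y $$ (c, a))"
  using assms by (simp add: index_mult_mat scalar_prod_def atLeast0LessThan lessThan_Suc_atMost)

lemma comm_idx:
  fixes X Y :: "complex mat"
  assumes "X \<in> carrier_mat (n+1) (n+1)" "Y \<in> carrier_mat (n+1) (n+1)" "b \<le> n" "a \<le> n"
  shows "(X * Y - Y * X) $$ (b, a) = (\<Sum>c\<le>n. X $$ (b, c) * Y $$ (c, a)) - (\<Sum>c\<le>n. Y $$ (b, c) * X $$ (c, a))"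
  using assms by (simp add: mat_mult_idx[symmetric])

lemma comb:
  fixes X Y :: "complex mat" and F :: "nat \<Rightarrow> nat \<Rightarrow> complex"
  assumes X: "X \<in> carrier_mat (n+1) (n+1)" and Y: "Y \<in> carrier_mat (n+1) (n+1)"
  shows "(\<Sum>a\<le>n. \<Sum>b\<le>n. (\<Sum>c\<le>n. \<Sum>d\<le>n.
       ((if a = d then F c b else 0) - (if b = c then F a d else 0)) * Y $$ (d, c)) * X $$ (b, a))
     = (\<Sum>a\<le>n. \<Sum>b\<le>n. F a b * (X * Y - Y * X) $$ (b, a))"
proof -
  have inner: "(\<Sum>c\<le>n. \<Sum>d\<le>n. ((if a = d then F c b else 0) - (if b = c then F a d else 0)) * Y $$ (d, c))
     = (\<Sum>c\<le>n. F c b * Y $$ (a, c)) - (\<Sum>d\<le>n. F a d * Y $$ (d, b))" if "a \<le> n" "b \<le> n" for a b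
  proof -
    have "(\<Sum>c\<le>n. \<Sum>d\<le>n. ((if a = d then F c b else 0) - (if b = c then F a d else 0)) * Y $$ (d, c))
       = (\<Sum>c\<le>n. \<Sum>d\<le>n. ((if a = d then F c b * Y $$ (d, c) else 0) - (if b = c then F a d * Y $$ (d, c) else 0)))"
      by (intro sum.cong refl) (simp add: left_diff_distrib)
    also have "\<dots> = (\<Sum>c\<le>n. F c b * Y $$ (a, c) - (if b = c then (\<Sum>d\<le>n. F a d * Y $$ (d, c)) else 0))"
      using that by (intro sum.cong refl) (simp add: sum_subtractf sum.delta)
    also have "\<dots> = (\<Sum>c\<le>n. F c b * Y $$ (a, c)) - (\<Sum>d\<le>n. F a d * Y $$ (d, b))"
      using that by (simp add: sum_subtractf sum.delta)
    finally show ?thesis .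
  qed
  have L1: "(\<Sum>a\<le>n. \<Sum>b\<le>n. \<Sum>c\<le>n. F c b * Y $$ (a, c) * X $$ (b, a)) = (\<Sum>a\<le>n. \<Sum>b\<le>n. \<Sum>c\<le>n. F a b * (X $$ (b, c) * Y $$ (c, a)))"
    by (subst sum3_rev) (simp add: mult_ac)
  have L2: "(\<Sum>a\<le>n. \<Sum>b\<le>n. \<Sum>d\<le>n. F a d * Y $$ (d, b) * X $$ (b, a)) = (\<Sum>a\<le>n. \<Sum>b\<le>n. \<Sum>c\<le>n. F a b * (Y $$ (b, c) * X $$ (c, a)))"
    by (rule sum.cong[OF refl], subst sum.swap) (simp add: mult_ac)
  have "(\<Sum>a\<le>n. \<Sum>b\<le>n. (\<Sum>c\<le>n. \<Sum>d\<le>n.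
       ((if a = d then F c b else 0) - (if b = c then F a d else 0)) * Y $$ (d, c)) * X $$ (b, a))
     = (\<Sum>a\<le>n. \<Sum>b\<le>n. ((\<Sum>c\<le>n. F c b * Y $$ (a, c)) - (\<Sum>d\<le>n. F a d * Y $$ (d, b))) * X $$ (b, a))"
    by (intro sum.cong refl) (simp add: inner)
  also have "\<dots> = (\<Sum>a\<le>n. \<Sum>b\<le>n. \<Sum>c\<le>n. F c b * Y $$ (a, c) * X $$ (b, a)) - (\<Sum>a\<le>n. \<Sum>b\<le>n. \<Sum>d\<le>n. F a d * Y $$ (d, b) * X $$ (b, a))"
    by (simp add: left_diff_distrib sum_distrib_right sum_subtractf)
  also have "\<dots> = (\<Sum>a\<le>n. \<Sum>b\<le>n. \<Sum>c\<le>n. F a b * (X $$ (b, c) * Y $$ (c, a))) - (\<Sum>a\<le>n. \<Sum>b\<le>n. \<Sum>c\<le>n. F a b * (Y $$ (b, c) * X $$ (c, a)))"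
    by (simp only: L1 L2)
  also have "\<dots> = (\<Sum>a\<le>n. \<Sum>b\<le>n. F a b * (X * Y - Y * X) $$ (b, a))"
  proof -
    have "(\<Sum>a\<le>n. \<Sum>b\<le>n. \<Sum>c\<le>n. F a b * (X $$ (b, c) * Y $$ (c, a))) - (\<Sum>a\<le>n. \<Sum>b\<le>n. \<Sum>c\<le>n. F a b * (Y $$ (b, c) * X $$ (c, a)))
      = (\<Sum>a\<le>n. \<Sum>b\<le>n. F a b * ((\<Sum>c\<le>n. X $$ (b, c) * Y $$ (c, a)) - (\<Sum>c\<le>n. Y $$ (b, c) * X $$ (c, a))))"
      by (simp add: right_diff_distrib sum_distrib_left sum_subtractf)
    also have "\<dots> = (\<Sum>a\<le>n. \<Sum>b\<le>n. F a b * (X * Y - Y * X) $$ (b, a))"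
      by (intro sum.cong refl, subst comm_idx[OF X Y]) auto
    finally show ?thesis .
  qed
  finally show ?thesis .
qed

lemma peval_psum: "peval (psum n) = Sf n"
  by (rule ext) (simp add: psum_def peval_sum peval_mult peval_pvar Sf_def)

lemma peval_Psi: "peval (Psi n a b) = psi n a b"
  by (rule ext) (auto simp: Psi_def peval_uminus peval_mult peval_pvar peval_psum psi_def Pf_def Qf_def)

lemma peval_tilde: "peval (tilde n X) = TT n X"
  by (rule ext) (simp add: tilde_def peval_sum peval_mult peval_Psi peval_pconst TT_def)

definition indep :: "nat \<Rightarrow> fn \<Rightarrow> bool" where "indep i w = (\<forall>x t. w (x(i:=t)) = w x)"
definition indepQ :: "nat \<Rightarrow> fn \<Rightarrow> bool" where "indepQ n w = (\<forall>i. n \<le> i \<and> i < 2*n \<longrightarrow> indep i w)"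

lemma pd_indep: "indep i w \<Longrightarrow> pd i w = (\<lambda>x. 0)"
  unfolding indep_def pd_def by (rule ext) (simp add: DERIV_imp_deriv)

lemma indep_pd: assumes "j \<noteq> i" "indep i w" shows "indep i (pd j w)"
  unfolding indep_def pd_def
proof (intro allI)
  fix x t
  have "w (x(i := t, j := s)) = w (x(j := s))" for s
    using assms fun_upd_twist[of i j x t s] unfolding indep_def by metis
  then show "deriv (\<lambda>s. w (x(i := t, j := s))) ((x(i := t)) j) = deriv (\<lambda>s. w (x(j := s))) (x j)"
    using assms(1) by simp
qed

lemma indep_const: "indep i (\<lambda>x. c)" by (simp add: indep_def)

lemma indep_pd_any: "indep i w \<Longrightarrow> indep i (pd j w)"
proof (cases "j = i")
  case True
  assume "indep i w"
  then have "pd j w = (\<lambda>x. 0)" using True pd_indep by simp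
  then show ?thesis by (simp add: indep_const)
next
  case False
  assume "indep i w"
  then show ?thesis using indep_pd[OF False] by simp
qed

lemma indepQ_pd: "indepQ n w \<Longrightarrow> indepQ n (pd j w)"
  unfolding indepQ_def using indep_pd_any by blast

lemma indepQ_pdl: "indepQ n w \<Longrightarrow> indepQ n (pdl is w)"
  by (induction "is") (auto intro: indepQ_pd)

lemma polyV_pdl: "polyV V u \<Longrightarrow> polyV V (pdl is u)"
  by (induction "is") (auto intro: polyV_pd)

lemma pd_pdl_comm: "polyV V u \<Longrightarrow> pd i (pdl is u) = pdl is (pd i u)"
proof (induction "is")
  case Nil then show ?case by simp
next
  case (Cons j rest)
  have "pd i (pdl (j # rest) u) = pd j (pd i (pdl rest u))"
    using pd_swap[OF polyV_pdl[OF Cons.prems]] by simp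
  also have "\<dots> = pdl (j # rest) (pd i u)" using Cons by simp
  finally show ?case .
qed

definition cntq :: "nat \<Rightarrow> nat list \<Rightarrow> nat" where "cntq n xs = length (filter (\<lambda>i. n \<le> i) xs)"

lemma cntq_simps[simp]: "cntq n [] = 0" "cntq n (i # xs) = (if n \<le> i then Suc (cntq n xs) else cntq n xs)"
  by (simp_all add: cntq_def)

lemma pdl_indepQ:
  assumes u: "polyV V u" and uq: "\<And>j. n \<le> j \<Longrightarrow> j < 2*n \<Longrightarrow> indepQ n (pd j u)"
  shows "set is \<subseteq> {..<2*n} \<Longrightarrow> cntq n is \<ge> 1 \<Longrightarrow> indepQ n (pdl is u)"
proof (induction "is")
  case Nil then show ?case by simp
next
  case (Cons i rest)
  show ?case
  proof (cases "cntq n rest \<ge> 1")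
    case True
    then show ?thesis using Cons by (auto intro: indepQ_pd)
  next
    case False
    then have "n \<le> i" "i < 2*n" using Cons.prems by (auto split: if_splits)
    have "pdl (i # rest) u = pdl rest (pd i u)"
      using pd_pdl_comm[OF u] by simp
    then show ?thesis using indepQ_pdl[OF uq[OF \<open>n \<le> i\<close> \<open>i < 2*n\<close>]] by simp
  qed
qed

lemma pdl_zero:
  assumes u: "polyV V u" and uq: "\<And>j. n \<le> j \<Longrightarrow> j < 2*n \<Longrightarrow> indepQ n (pd j u)"
  shows "set is \<subseteq> {..<2*n} \<Longrightarrow> cntq n is \<ge> 2 \<Longrightarrow> pdl is u = (\<lambda>x. 0)"
proof (induction "is")
  case Nil then show ?case by simp
next
  case (Cons i rest)
  show ?case
  proof (cases "n \<le> i")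
    case True
    then have "cntq n rest \<ge> 1" "set rest \<subseteq> {..<2*n}" "i < 2*n" using Cons.prems by auto
    then have "indepQ n (pdl rest u)" using pdl_indepQ[OF u uq] by blast
    then have "indep i (pdl rest u)" using True \<open>i < 2*n\<close> unfolding indepQ_def by blast
    then show ?thesis by (simp add: pd_indep)
  next
    case False
    then show ?thesis using Cons by auto
  qed
qed

lemma pd_TT: "pd j (TT n X) x = (\<Sum>a\<le>n. \<Sum>b\<le>n. (pd j (Pf a) x * Qf n b x + Pf a x * pd j (Qf n b) x) * X $$ (b, a))"
proof -
  have pj: "polyV UNIV (\<lambda>x. psi n a b x * X $$ (b, a))" for a b
    by (intro polyV.pmul polyV_psi polyV.pc)
  have pi: "polyV UNIV (\<lambda>x. \<Sum>b\<le>n. psi n a b x * X $$ (b, a))" for a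
    by (intro polyV_sum pj) auto
  have pe: "psi n a b = (\<lambda>x. Pf a x * Qf n b x)" for a b by (simp add: psi_def[abs_def])
  show ?thesis
    unfolding TT_def[abs_def]
    apply (simp add: pd_sum[OF _ pi] pd_sum[OF _ pj] pd_mul[OF polyV_psi polyV.pc])
    apply (simp add: pe pd_mul[OF polyV_Pf polyV_Qf])
    done
qed

lemma TT_q_indep:
  assumes "n \<le> j" "j < 2*n"
  shows "indepQ n (pd j (TT n X))"
proof -
  obtain k where k: "j = n + k" "k < n" using assms by (metis add_less_cancel_left le_Suc_ex mult_2)
  have e: "pd j (TT n X) x = (\<Sum>a\<le>n. \<Sum>b\<le>n. (Pf a x * (if b = 0 then - x k else if b = Suc k then 1 else 0)) * X $$ (b, a))" for x
    unfolding pd_TT k(1) using k(2) by (intro sum.cong refl) (simp add: pd_Pf_q pd_Qf_q)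
  have pf: "Pf a (x(i:=t)) = Pf a x" if "a \<le> n" "n \<le> i" for a i x t
    using that by (auto simp: Pf_def)
  show ?thesis
    unfolding indepQ_def indep_def e
    using k by (auto simp: pf intro!: sum.cong)
qed

lemma Pl_one: "Pl n 1 u v x = poisson n u v x"
proof -
  have S: "{xs. set xs \<subseteq> {..<2*n} \<and> length xs = 1} = (\<lambda>i. [i]) ` {..<2*n}"
    by (auto simp: length_Suc_conv)
  have inj: "inj_on (\<lambda>i. [i]) A" for A :: "nat set" by (auto simp: inj_on_def)
  have "Pl n 1 u v x = (\<Sum>i<2*n. \<Sum>j<2*n. Lam n i j * pd i u x * pd j v x)"
    unfolding Pl_def S by (simp add: sum.reindex[OF inj])
  also have "\<dots> = (\<Sum>i<2*n. if i < n then pd i u x * pd (n + i) v x else - (pd i u x * pd (i - n) v x))"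
  proof (intro sum.cong refl)
    fix i assume i0: "i \<in> {..<2*n}"
    then have i: "i < 2*n" by simp
    show "(\<Sum>j<2*n. Lam n i j * pd i u x * pd j v x) = (if i < n then pd i u x * pd (n + i) v x else - (pd i u x * pd (i - n) v x))"
    proof (cases "i < n")
      case True
      have "(\<Sum>j<2*n. Lam n i j * pd i u x * pd j v x) = (\<Sum>j<2*n. if j = n + i then pd i u x * pd j v x else 0)"
        using True by (intro sum.cong refl) (auto simp: Lam_def)
      also have "\<dots> = pd i u x * pd (n + i) v x" using True by (simp add: sum.delta')
      finally show ?thesis using True by simp
    next
      case False
      have "(\<Sum>j<2*n. Lam n i j * pd i u x * pd j v x) = (\<Sum>j<2*n. if j = i - n then - (pd i u x * pd j v x) else 0)"
        using False i by (intro sum.cong refl) (auto simp: Lam_def)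
      also have "\<dots> = - (pd i u x * pd (i - n) v x)" using False i by (simp add: sum.delta')
      finally show ?thesis using False by simp
    qed
  qed
  also have "\<dots> = poisson n u v x"
  proof -
    have split: "(\<Sum>i<n + m. f i) = (\<Sum>i<n. f i) + (\<Sum>i<m. f (n + i))" for f :: "nat \<Rightarrow> complex" and m
      by (induction m) (simp_all add: add_ac)
    show ?thesis
      unfolding mult_2 split poisson_def by (simp add: sum_subtractf sum_negf)
  qed
  finally show ?thesis .
qed

lemma cnt_ge:
  assumes "length is = l" "length js = l" "(\<Prod>r<l. Lam n (is ! r) (js ! r)) \<noteq> 0"
  shows "l \<le> cntq n is + cntq n js"
proof -
  have nz: "n \<le> is ! r \<or> n \<le> js ! r" if r: "r < l" for r
  proof -
    have "Lam n (is ! r) (js ! r) \<noteq> 0" using assms(3) r by (metis prod_zero_iff finite_lessThan lessThan_iff)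
    then show ?thesis by (auto simp: Lam_def split: if_splits)
  qed
  have c: "cntq n xs = card {r. r < length xs \<and> n \<le> xs ! r}" for xs
    unfolding cntq_def by (simp add: length_filter_conv_card)
  have "{..<l} \<subseteq> {r. r < l \<and> n \<le> is ! r} \<union> {r. r < l \<and> n \<le> js ! r}" using nz by auto
  then have "card {..<l} \<le> card ({r. r < l \<and> n \<le> is ! r} \<union> {r. r < l \<and> n \<le> js ! r})"
    by (intro card_mono) auto
  also have "\<dots> \<le> card {r. r < l \<and> n \<le> is ! r} + card {r. r < l \<and> n \<le> js ! r}"
    by (rule card_Un_le)
  finally show ?thesis using assms by (simp add: c)
qed

lemma Pl_zero:
  assumes "3 \<le> l"
  shows "Pl n l (TT n X) (TT n Y) x = 0"
  unfolding Pl_def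
proof (intro sum.neutral ballI)
  fix "is" js
  assume i: "is \<in> {xs. set xs \<subseteq> {..<2*n} \<and> length xs = l}" and j: "js \<in> {xs. set xs \<subseteq> {..<2*n} \<and> length xs = l}"
  show "(\<Prod>r<l. Lam n (is ! r) (js ! r)) * pdl is (TT n X) x * pdl js (TT n Y) x = 0"
  proof (cases "(\<Prod>r<l. Lam n (is ! r) (js ! r)) = 0")
    case True then show ?thesis by simp
  next
    case False
    then have "l \<le> cntq n is + cntq n js" using cnt_ge i j by auto
    then have "cntq n is \<ge> 2 \<or> cntq n js \<ge> 2" using assms by linarith
    then show ?thesis
    proof
      assume "2 \<le> cntq n is"
      then have "pdl is (TT n X) = (\<lambda>x. 0)" using pdl_zero[OF polyV_TT TT_q_indep, of n "is" X] i by simp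
      then show ?thesis by simp
    next
      assume "2 \<le> cntq n js"
      then have "pdl js (TT n Y) = (\<lambda>x. 0)" using pdl_zero[OF polyV_TT TT_q_indep, of n js Y] j by simp
      then show ?thesis by simp
    qed
  qed
qed

lemma moyal_TT: "moyal n (TT n X) (TT n Y) x = poisson n (TT n X) (TT n Y) x"
proof -
  have "moyal n (TT n X) (TT n Y) x = (\<Sum>l\<in>{0}. (-1/4 :: complex) ^ l / fact (2*l+1) * Pl n (2*l+1) (TT n X) (TT n Y) x)"
    unfolding moyal_def
  proof (rule suminf_finite)
    fix l :: nat assume "l \<notin> {0}"
    then have "3 \<le> 2*l+1" by simp
    then show "(-1/4 :: complex) ^ l / fact (2*l+1) * Pl n (2*l+1) (TT n X) (TT n Y) x = 0"
      by (simp only: Pl_zero mult_zero_right)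
  qed simp
  also have "\<dots> = poisson n (TT n X) (TT n Y) x" using Pl_one[of n "TT n X" "TT n Y" x] by simp
  finally show ?thesis .
qed

abbreviation vm :: "nat \<Rightarrow> (nat \<Rightarrow>\<^sub>0 nat)" where "vm i \<equiv> Poly_Mapping.single i (1::nat)"

definition WF :: "nat \<Rightarrow> (nat \<Rightarrow>\<^sub>0 nat) \<Rightarrow> fn \<Rightarrow> (nat \<Rightarrow> complex) \<Rightarrow> complex" where
  "WF n m \<phi> p = \<i> ^ length (qalpha n m) *
      pdl (qalpha n m) (\<lambda>s. (\<Prod>k<n. (p k + s k / 2) ^ Poly_Mapping.lookup m k) * \<phi> (\<lambda>k. p k + s k)) (\<lambda>_. 0)"

lemma Weyl_lin: "Weyl n f \<phi> p = lin (\<lambda>m. WF n m \<phi> p) f"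
  by (simp add: Weyl_def lin_def WF_def mult.assoc)

lemma concat_delta: "concat (map (\<lambda>c. if c = k then [c] else []) [0..<n]) = (if k < n then [k] else [])"
  by (induction n) auto

lemma qalpha_single:
  assumes "\<And>c. c < n \<Longrightarrow> Poly_Mapping.lookup m (n + c) = (if c = k then 1 else 0)" "k < n"
  shows "qalpha n m = [k]"
proof -
  have e: "map (\<lambda>c. replicate (Poly_Mapping.lookup m (n + c)) c) [0..<n] = map (\<lambda>c. if c = k then [c] else []) [0..<n]"
    using assms(1) by (intro map_cong refl) auto
  show ?thesis unfolding qalpha_def e concat_delta using assms(2) by simp
qed

lemma deriv_shift_phi:
  assumes "polyV V \<phi>"
  shows "((\<lambda>t. \<phi> (p(k := p k + t))) has_field_derivative pd k \<phi> p) (at 0)"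
proof -
  have d1: "((\<lambda>u. \<phi> (p(k := u))) has_field_derivative pd k \<phi> p) (at (p k + 0))"
    using polyV_deriv[OF assms, of p k] by simp
  have d2: "((\<lambda>t. p k + t) has_field_derivative 1) (at 0)"
    by (auto intro!: derivative_eq_intros)
  show ?thesis using DERIV_chain2[OF d1 d2] by simp
qed

lemma WF_gen:
  assumes phi: "polyV V \<phi>" and q: "qalpha n m = [k]" and kn: "k < n"
    and pr: "\<And>t. (\<Prod>c<n. (p c + ((\<lambda>_. 0)(k := t)) c / 2) ^ Poly_Mapping.lookup m c) = (c1 + d1 * t) * (c2 + d2 * t)"
  shows "WF n m \<phi> p = \<i> * ((d1 * c2 + c1 * d2) * \<phi> p + c1 * c2 * pd k \<phi> p)"
proof -
  have eq: "(\<lambda>c. p c + ((\<lambda>_. 0)(k := t)) c) = p(k := p k + t)" for t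
    by (rule ext) simp
  have "pd k (\<lambda>s. (\<Prod>c<n. (p c + s c / 2) ^ Poly_Mapping.lookup m c) * \<phi> (\<lambda>c. p c + s c)) (\<lambda>_. 0)
     = deriv (\<lambda>t. (c1 + d1 * t) * (c2 + d2 * t) * \<phi> (p(k := p k + t))) 0"
    by (simp only: pd_def pr eq)
  also have "\<dots> = (d1 * c2 + c1 * d2) * \<phi> p + c1 * c2 * pd k \<phi> p"
  proof (rule DERIV_imp_deriv)
    have "((\<lambda>t. (c1 + d1 * t) * (c2 + d2 * t) * \<phi> (p(k := p k + t))) has_field_derivative
      (d1 * (c2 + d2 * 0) + d2 * (c1 + d1 * 0)) * \<phi> (p(k := p k + 0)) + pd k \<phi> p * ((c1 + d1 * 0) * (c2 + d2 * 0))) (at 0)"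
      by (intro DERIV_mult deriv_shift_phi[OF phi] derivative_eq_intros) auto
    then show "((\<lambda>t. (c1 + d1 * t) * (c2 + d2 * t) * \<phi> (p(k := p k + t))) has_field_derivative
      (d1 * c2 + c1 * d2) * \<phi> p + c1 * c2 * pd k \<phi> p) (at 0)"
      by (simp add: algebra_simps)
  qed
  finally show ?thesis unfolding WF_def q by simp
qed

lemma pow_if01: "(x::complex) ^ (if P then 1 else 0) = (if P then x else 1)" by simp

lemma prod_delta1: "finite A \<Longrightarrow> a \<in> A \<Longrightarrow> (\<Prod>c\<in>A. (g c :: complex) ^ (if a = c then 1 else 0)) = g a"
  by (simp add: pow_if01 prod.delta)

lemma prod_delta2: "finite A \<Longrightarrow> a1 \<in> A \<Longrightarrow> a2 \<in> A \<Longrightarrow>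
  (\<Prod>c\<in>A. (g c :: complex) ^ ((if a1 = c then 1 else 0) + (if a2 = c then 1 else 0))) = g a1 * g a2"
  by (simp add: power_add prod.distrib prod_delta1)

lemma lookup_vm: "Poly_Mapping.lookup (vm i) c = (if i = c then 1 else 0)"
  by (simp add: lookup_single when_def)

lemma WF_q:
  assumes phi: "polyV V \<phi>" and b: "b < n"
  shows "WF n (vm (n + b)) \<phi> p = \<i> * pd b \<phi> p"
proof -
  have q: "qalpha n (vm (n + b)) = [b]" by (rule qalpha_single) (use b in \<open>auto simp: lookup_single when_def\<close>)
  have "(\<Prod>c<n. (p c + ((\<lambda>_. 0)(b := t)) c / 2) ^ Poly_Mapping.lookup (vm (n + b)) c) = (1 + 0 * t) * (1 + 0 * t)" for t
    by (simp add: lookup_single when_def)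
  from WF_gen[OF phi q b this] show ?thesis by simp
qed

lemma WF_pq:
  assumes phi: "polyV V \<phi>" and a: "a < n" and b: "b < n"
  shows "WF n (vm a + vm (n + b)) \<phi> p = \<i> * ((if a = b then 1/2 else 0) * \<phi> p + p a * pd b \<phi> p)"
proof -
  have q: "qalpha n (vm a + vm (n + b)) = [b]" by (rule qalpha_single) (use a b in \<open>auto simp: lookup_single when_def lookup_add\<close>)
  have "(\<Prod>c<n. (p c + ((\<lambda>_. 0)(b := t)) c / 2) ^ Poly_Mapping.lookup (vm a + vm (n + b)) c)
     = (\<Prod>c<n. (p c + ((\<lambda>_. 0)(b := t)) c / 2) ^ (if a = c then 1 else 0))" for t
    by (intro prod.cong refl) (auto simp: lookup_single when_def lookup_add)
  also have "\<dots> t = (p a + (if a = b then 1/2 else 0) * t) * (1 + 0 * t)" for t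
    using a by (simp add: prod_delta1)
  finally have pr: "\<And>t. (\<Prod>c<n. (p c + ((\<lambda>_. 0)(b := t)) c / 2) ^ Poly_Mapping.lookup (vm a + vm (n + b)) c) =
     (p a + (if a = b then 1/2 else 0) * t) * (1 + 0 * t)" .
  from WF_gen[OF phi q b pr] show ?thesis by simp
qed

lemma WF_ppq:
  assumes phi: "polyV V \<phi>" and a: "a < n" and b: "b < n"
  shows "WF n (vm a + vm b + vm (n + b)) \<phi> p = \<i> * (((if a = b then p b / 2 else 0) + p a / 2) * \<phi> p + p a * p b * pd b \<phi> p)"
proof -
  have q: "qalpha n (vm a + vm b + vm (n + b)) = [b]" by (rule qalpha_single) (use a b in \<open>auto simp: lookup_single when_def lookup_add\<close>)
  have "(\<Prod>c<n. (p c + ((\<lambda>_. 0)(b := t)) c / 2) ^ Poly_Mapping.lookup (vm a + vm b + vm (n + b)) c)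
     = (\<Prod>c<n. (p c + ((\<lambda>_. 0)(b := t)) c / 2) ^ ((if a = c then 1 else 0) + (if b = c then 1 else 0)))" for t
    by (intro prod.cong refl) (auto simp: lookup_single when_def lookup_add)
  also have "\<dots> t = (p a + (if a = b then 1/2 else 0) * t) * (p b + 1/2 * t)" for t
    using a b by (simp add: prod_delta2)
  finally have pr: "\<And>t. (\<Prod>c<n. (p c + ((\<lambda>_. 0)(b := t)) c / 2) ^ Poly_Mapping.lookup (vm a + vm b + vm (n + b)) c) =
     (p a + (if a = b then 1/2 else 0) * t) * (p b + 1/2 * t)" .
  from WF_gen[OF phi q b pr] show ?thesis by (simp add: algebra_simps)
qed

lemma pvar_mult: "pvar i * pvar j = Poly_Mapping.single (vm i + vm j) 1"
  by (simp add: pvar_def mult_single)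

lemma psum_singles: "psum n = (\<Sum>j<n. Poly_Mapping.single (vm j + vm (n + j)) 1)"
  by (simp add: psum_def pvar_mult)

lemma lin_pconst: "lin h (pconst c * f) = c * lin h f"
proof -
  have "pconst c * f = (\<Sum>m\<in>Poly_Mapping.keys f. Poly_Mapping.single m (c * Poly_Mapping.lookup f m))"
    by (subst poly_rep[of f]) (simp add: pconst_def sum_distrib_left mult_single)
  then have "lin h (pconst c * f) = (\<Sum>m\<in>Poly_Mapping.keys f. c * Poly_Mapping.lookup f m * h m)"
    by (simp add: lin_sum)
  then show ?thesis
    by (simp add: lin_def sum_distrib_left mult.assoc)
qed

lemma lin_pconst_right: "lin h (f * pconst c) = c * lin h f"
  by (simp add: mult.commute[of f] lin_pconst)

definition Dop :: "nat \<Rightarrow> nat \<Rightarrow> fn \<Rightarrow> fn" where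
  "Dop n b \<phi> p = (if b = 0 then - ((\<Sum>j<n. p j * pd j \<phi> p) + (of_nat n + 1) / 2 * \<phi> p) else pd (b - 1) \<phi> p)"

definition Rop :: "nat \<Rightarrow> nat \<Rightarrow> nat \<Rightarrow> fn \<Rightarrow> fn" where
  "Rop n a b \<phi> p = - (Pf a p * Dop n b \<phi> p + (if a = b then 1/2 else 0) * \<phi> p)"

lemma sum_delta_mult: "finite A \<Longrightarrow> (\<Sum>j\<in>A. (if k = j then f j else 0) * (c::complex)) = (if k \<in> A then f k * c else 0)"
  by (simp add: sum_distrib_right[symmetric] sum.delta)

lemma Weyl_Psi:
  assumes phi: "polyV V \<phi>" and a: "a \<le> n" and b: "b \<le> n"
  shows "\<i> * Weyl n (Psi n a b) \<phi> p = Rop n a b \<phi> p"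
proof (cases "a = 0")
  case a0: True
  show ?thesis
  proof (cases "b = 0")
    case b0: True
    have P: "Psi n a b = - (\<Sum>j<n. Poly_Mapping.single (vm j + vm (n + j)) 1)"
      using a0 b0 by (simp add: Psi_def psum_singles)
    have wj: "WF n (vm j + vm (n + j)) \<phi> p = \<i> * (1/2 * \<phi> p + p j * pd j \<phi> p)" if "j < n" for j
      using WF_pq[OF phi that that] by simp
    have "\<i> * Weyl n (Psi n a b) \<phi> p = \<i> * - (\<Sum>j<n. WF n (vm j + vm (n + j)) \<phi> p)"
      unfolding P by (simp only: Weyl_lin lin_uminus lin_sum lin_single mult_1)
    also have "\<dots> = \<i> * - (\<Sum>j<n. \<i> * (1/2 * \<phi> p + p j * pd j \<phi> p))"
    proof -
      have "(\<Sum>j<n. WF n (vm j + vm (n + j)) \<phi> p) = (\<Sum>j<n. \<i> * (1/2 * \<phi> p + p j * pd j \<phi> p))"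
        by (rule sum.cong[OF refl], rule wj, simp)
      then show ?thesis by (rule arg_cong)
    qed
    also have "\<dots> = (\<Sum>j<n. 1/2 * \<phi> p + p j * pd j \<phi> p)"
      by (simp add: sum_distrib_left[symmetric])
    also have "\<dots> = of_nat n / 2 * \<phi> p + (\<Sum>j<n. p j * pd j \<phi> p)"
      by (simp add: sum.distrib)
    also have "\<dots> = Rop n a b \<phi> p"
      using a0 b0 by (simp add: Rop_def Dop_def Pf_def algebra_simps add_divide_distrib)
    finally show ?thesis .
  next
    case b1: False
    have P: "Psi n a b = Poly_Mapping.single (vm (n + (b - 1))) 1"
      using a0 b1 by (simp add: Psi_def pvar_def)
    have "\<i> * Weyl n (Psi n a b) \<phi> p = \<i> * WF n (vm (n + (b - 1))) \<phi> p"
      unfolding P by (simp only: Weyl_lin lin_single mult_1)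
    also have "\<dots> = \<i> * (\<i> * pd (b - 1) \<phi> p)"
      using b1 b by (simp only: WF_q[OF phi, of "b - 1" n p])
    also have "\<dots> = Rop n a b \<phi> p"
      using a0 b1 b by (simp add: Rop_def Dop_def Pf_def)
    finally show ?thesis .
  qed
next
  case a1: False
  show ?thesis
  proof (cases "b = 0")
    case b0: True
    have P: "Psi n a b = - (\<Sum>j<n. Poly_Mapping.single (vm (a - 1) + vm j + vm (n + j)) 1)"
      using a1 b0 by (simp add: Psi_def psum_singles sum_distrib_left pvar_def mult_single add.assoc)
    have wj: "WF n (vm (a - 1) + vm j + vm (n + j)) \<phi> p = \<i> * (((if a - 1 = j then p j / 2 else 0) + p (a - 1) / 2) * \<phi> p + p (a - 1) * p j * pd j \<phi> p)"
      if "j < n" for j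
      using WF_ppq[OF phi _ that, of "a - 1" p] a a1 by simp
    have "\<i> * Weyl n (Psi n a b) \<phi> p = \<i> * - (\<Sum>j<n. WF n (vm (a - 1) + vm j + vm (n + j)) \<phi> p)"
      unfolding P by (simp only: Weyl_lin lin_uminus lin_sum lin_single mult_1)
    also have "\<dots> = \<i> * - (\<Sum>j<n. \<i> * (((if a - 1 = j then p j / 2 else 0) + p (a - 1) / 2) * \<phi> p + p (a - 1) * p j * pd j \<phi> p))"
    proof -
      have "(\<Sum>j<n. WF n (vm (a - 1) + vm j + vm (n + j)) \<phi> p) = (\<Sum>j<n. \<i> * (((if a - 1 = j then p j / 2 else 0) + p (a - 1) / 2) * \<phi> p + p (a - 1) * p j * pd j \<phi> p))"
        by (rule sum.cong[OF refl], rule wj, simp)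
      then show ?thesis by (rule arg_cong)
    qed
    also have "\<dots> = (\<Sum>j<n. ((if a - 1 = j then p j / 2 else 0) + p (a - 1) / 2) * \<phi> p + p (a - 1) * p j * pd j \<phi> p)"
      by (simp add: sum_distrib_left[symmetric])
    also have "\<dots> = (p (a - 1) / 2 + of_nat n * (p (a - 1) / 2)) * \<phi> p + p (a - 1) * (\<Sum>j<n. p j * pd j \<phi> p)"
      using a a1 by (simp add: sum.distrib distrib_right sum_distrib_left sum_delta_mult mult.assoc)
    also have "\<dots> = Rop n a b \<phi> p"
      using a1 b0 by (simp add: Rop_def Dop_def Pf_def algebra_simps add_divide_distrib)
    finally show ?thesis .
  next
    case b1: False
    have P: "Psi n a b = Poly_Mapping.single (vm (a - 1) + vm (n + (b - 1))) 1"
      using a1 b1 by (simp add: Psi_def pvar_def mult_single)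
    have "\<i> * Weyl n (Psi n a b) \<phi> p = \<i> * WF n (vm (a - 1) + vm (n + (b - 1))) \<phi> p"
      unfolding P by (simp only: Weyl_lin lin_single mult_1)
    also have "\<dots> = \<i> * (\<i> * ((if a - 1 = b - 1 then 1/2 else 0) * \<phi> p + p (a - 1) * pd (b - 1) \<phi> p))"
      using a a1 b1 b by (simp only: WF_pq[OF phi, of "a - 1" n "b - 1" p])
    also have "\<dots> = Rop n a b \<phi> p"
    proof -
      have ab: "(a - Suc 0 = b - Suc 0) = (a = b)" using a1 b1 by arith
      show ?thesis using a a1 b1 b by (simp add: Rop_def Dop_def Pf_def algebra_simps ab)
    qed
    finally show ?thesis .
  qed
qed

lemma rho0_Rop:
  assumes phi: "polyV V \<phi>"
  shows "rho0 n X \<phi> p = (\<Sum>a\<le>n. \<Sum>b\<le>n. X $$ (b, a) * Rop n a b \<phi> p)"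
proof -
  have "rho0 n X \<phi> p = (\<Sum>a\<le>n. \<Sum>b\<le>n. X $$ (b, a) * (\<i> * Weyl n (Psi n a b) \<phi> p))"
    unfolding rho0_def tilde_def Weyl_lin
    by (simp add: sum_distrib_left lin_sum lin_pconst lin_pconst_right mult_ac)
  also have "\<dots> = (\<Sum>a\<le>n. \<Sum>b\<le>n. X $$ (b, a) * Rop n a b \<phi> p)"
    by (intro sum.cong refl) (simp add: Weyl_Psi[OF phi])
  finally show ?thesis .
qed

lemma Dop0: "Dop n 0 \<phi> = (\<lambda>p. - ((\<Sum>j<n. p j * pd j \<phi> p) + (of_nat n + 1) / 2 * \<phi> p))"
  by (rule ext) (simp add: Dop_def)

lemma DopS: "b \<noteq> 0 \<Longrightarrow> Dop n b \<phi> = pd (b - 1) \<phi>"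
  by (rule ext) (simp add: Dop_def)

lemma polyV_mono: "polyV V f \<Longrightarrow> V \<subseteq> W \<Longrightarrow> polyV W f"
  by (induction rule: polyV.induct) (auto intro: polyV.intros)

lemma polyV_Dop: "polyV {..<n} \<phi> \<Longrightarrow> polyV {..<n} (Dop n b \<phi>)"
proof (cases "b = 0")
  case True
  assume phi: "polyV {..<n} \<phi>"
  show ?thesis unfolding True Dop0
    by (intro polyV_minus polyV.padd polyV_sum polyV.pmul polyV.pv polyV_pd phi polyV.pc) auto
next
  case False
  assume phi: "polyV {..<n} \<phi>"
  show ?thesis unfolding DopS[OF False] by (rule polyV_pd[OF phi])
qed

lemma polyV_Pf_n: "a \<le> n \<Longrightarrow> polyV {..<n} (Pf a)"
  by (cases "a = 0") (auto simp: Pf_def[abs_def] intro: polyV.pc polyV.pv)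

lemma polyV_Rop: "polyV {..<n} \<phi> \<Longrightarrow> a \<le> n \<Longrightarrow> polyV {..<n} (Rop n a b \<phi>)"
  unfolding Rop_def[abs_def]
  by (intro polyV_minus polyV.padd polyV.pmul polyV_Pf_n polyV_Dop polyV.pc) auto

lemma Dop_add: "polyV V f \<Longrightarrow> polyV V g \<Longrightarrow> Dop n b (\<lambda>x. f x + g x) p = Dop n b f p + Dop n b g p"
  by (simp add: Dop_def pd_add[of V] sum.distrib field_simps)

lemma Dop_cmul: "polyV V f \<Longrightarrow> Dop n b (\<lambda>x. c * f x) p = c * Dop n b f p"
  by (simp add: Dop_def pd_cmul[of V] sum_distrib_left algebra_simps)

lemma Dop_minus: "polyV V f \<Longrightarrow> Dop n b (\<lambda>x. - f x) p = - Dop n b f p"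
  using Dop_cmul[of V f n b "-1" p] by simp

lemma Dop_sum: "finite I \<Longrightarrow> (\<And>i. i \<in> I \<Longrightarrow> polyV V (g i)) \<Longrightarrow> Dop n b (\<lambda>x. \<Sum>i\<in>I. g i x) p = (\<Sum>i\<in>I. Dop n b (g i) p)"
proof (induction I rule: finite_induct)
  case empty then show ?case by (simp add: Dop_def)
next
  case (insert i I)
  have "Dop n b (\<lambda>x. \<Sum>i\<in>insert i I. g i x) p = Dop n b (\<lambda>x. g i x + (\<Sum>i\<in>I. g i x)) p"
    using insert by simp
  also have "\<dots> = Dop n b (g i) p + Dop n b (\<lambda>x. \<Sum>i\<in>I. g i x) p"
    by (rule Dop_add[of V]) (use insert in \<open>auto intro: polyV_sum\<close>)
  finally show ?case using insert by simp
qed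

lemma mult_if0: "(y::complex) * (if P then x else 0) = (if P then y * x else 0)" by simp

lemma Dop_Pf:
  assumes psi: "polyV V \<psi>" and c: "c \<le> n"
  shows "Dop n b (\<lambda>x. Pf c x * \<psi> x) p = ((if b = c then 1 else 0) - (if b = 0 then Pf c p else 0)) * \<psi> p + Pf c p * Dop n b \<psi> p"
proof (cases "b = 0")
  case True
  note psi = polyV_mono[OF psi subset_UNIV]
  have "Dop n b (\<lambda>x. Pf c x * \<psi> x) p = - ((\<Sum>j<n. p j * ((if c = Suc j then 1 else 0) * \<psi> p + Pf c p * pd j \<psi> p)) + (of_nat n + 1) / 2 * (Pf c p * \<psi> p))"
    using True by (simp add: Dop_def pd_mul[OF polyV_Pf psi] pd_Pf_p del: ifmul1)
  also have "\<dots> = - ((if 0 < c \<and> c \<le> n then p (c - 1) * \<psi> p else 0) + Pf c p * (\<Sum>j<n. p j * pd j \<psi> p) + (of_nat n + 1) / 2 * (Pf c p * \<psi> p))"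
    by (simp add: distrib_left sum.distrib sum_distrib_left mult_if0 algebra_simps)
  also have "\<dots> = ((if b = c then 1 else 0) - (if b = 0 then Pf c p else 0)) * \<psi> p + Pf c p * Dop n b \<psi> p"
    using True c by (auto simp: Dop_def Pf_def algebra_simps)
  finally show ?thesis .
next
  case False
  note psi = polyV_mono[OF psi subset_UNIV]
  show ?thesis using False
    by (auto simp: Dop_def pd_mul[OF polyV_Pf psi] pd_Pf_p)
qed

lemma Dop_comm:
  assumes phi: "polyV {..<n} \<phi>" and b: "b \<le> n" and d: "d \<le> n"
  shows "Dop n b (Dop n d \<phi>) p - Dop n d (Dop n b \<phi>) p = (if b = 0 then Dop n d \<phi> p else 0) - (if d = 0 then Dop n b \<phi> p else 0)"
proof -
  note phiU = polyV_mono[OF phi subset_UNIV]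
  have key: "Dop n 0 (pd k \<phi>) p - pd k (Dop n 0 \<phi>) p = pd k \<phi> p" if k: "k < n" for k
  proof -
    have pj: "polyV UNIV (\<lambda>p. p j * pd j \<phi> p)" for j
      by (intro polyV.pmul polyV.pv polyV_pd phiU) auto
    have s: "polyV UNIV (\<lambda>p. \<Sum>j<n. p j * pd j \<phi> p)" by (intro polyV_sum pj) auto
    have c: "polyV UNIV (\<lambda>p. (of_nat n + 1) / 2 * \<phi> p)" by (intro polyV.pmul polyV.pc phiU)
    have "pd k (Dop n 0 \<phi>) = pd k (\<lambda>p. - ((\<Sum>j<n. p j * pd j \<phi> p) + (of_nat n + 1) / 2 * \<phi> p))"
      by (simp only: Dop0)
    also have "\<dots> = (\<lambda>p. - ((\<Sum>j<n. pd k (\<lambda>p. p j * pd j \<phi> p) p) + (of_nat n + 1) / 2 * pd k \<phi> p))"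
      by (simp only: pd_minus[OF polyV.padd[OF s c]] pd_add[OF s c] pd_sum[OF finite_lessThan pj] pd_cmul[OF phiU])
    also have "\<dots> = (\<lambda>p. - ((\<Sum>j<n. (if k = j then 1 else 0) * pd j \<phi> p + p j * pd k (pd j \<phi>) p) + (of_nat n + 1) / 2 * pd k \<phi> p))"
      by (simp only: pd_mul[OF polyV.pv polyV_pd[OF phiU]] pd_var UNIV_I)
    finally have "pd k (Dop n 0 \<phi>) p = - ((\<Sum>j<n. (if k = j then 1 else 0) * pd j \<phi> p + p j * pd k (pd j \<phi>) p) + (of_nat n + 1) / 2 * pd k \<phi> p)"
      by simp
    also have "\<dots> = - (pd k \<phi> p + (\<Sum>j<n. p j * pd j (pd k \<phi>) p) + (of_nat n + 1) / 2 * pd k \<phi> p)"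
      using k by (simp add: sum.distrib sum.delta pd_swap[OF phiU])
    finally show ?thesis by (simp add: Dop0)
  qed
  show ?thesis
  proof (cases "b = 0")
    case b0: True
    show ?thesis
    proof (cases "d = 0")
      case True then show ?thesis using b0 by simp
    next
      case False
      then show ?thesis using b0 key[of "d - 1"] d by (simp add: DopS)
    qed
  next
    case b1: False
    show ?thesis
    proof (cases "d = 0")
      case True
      have bn: "b - 1 < n" using b b1 by arith
      have "Dop n b (Dop n d \<phi>) p - Dop n d (Dop n b \<phi>) p = -(Dop n 0 (pd (b - 1) \<phi>) p - pd (b - 1) (Dop n 0 \<phi>) p)"
        using True b1 by (simp add: DopS)
      also have "\<dots> = - pd (b - 1) \<phi> p" by (simp only: key[OF bn])
      finally show ?thesis using True b1 by (simp add: DopS)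
    next
      case False
      then show ?thesis using b1 by (simp add: DopS pd_swap[OF phi])
    qed
  qed
qed

lemma Rop_fun: "Rop n c d \<phi> = (\<lambda>x. - (Pf c x * Dop n d \<phi> x + (if c = d then 1/2 else 0) * \<phi> x))"
  by (rule ext) (simp add: Rop_def)

lemma Rop_Rop:
  assumes phi: "polyV {..<n} \<phi>" and c: "c \<le> n"
  shows "Rop n a b (Rop n c d \<phi>) p =
    Pf a p * (((if b = c then 1 else 0) - (if b = 0 then Pf c p else 0)) * Dop n d \<phi> p + Pf c p * Dop n b (Dop n d \<phi>) p
       + (if c = d then 1/2 else 0) * Dop n b \<phi> p)
    + (if a = b then 1/2 else 0) * (Pf c p * Dop n d \<phi> p + (if c = d then 1/2 else 0) * \<phi> p)"
proof -
  have p1: "polyV {..<n} (\<lambda>x. Pf c x * Dop n d \<phi> x)" by (intro polyV.pmul polyV_Pf_n c polyV_Dop phi)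
  have p2: "polyV {..<n} (\<lambda>x. (if c = d then 1/2 else 0) * \<phi> x)" by (intro polyV.pmul polyV.pc phi)
  have "Dop n b (Rop n c d \<phi>) p = - (Dop n b (\<lambda>x. Pf c x * Dop n d \<phi> x) p + (if c = d then 1/2 else 0) * Dop n b \<phi> p)"
    unfolding Rop_fun
    by (simp only: Dop_minus[OF polyV.padd[OF p1 p2]] Dop_add[OF p1 p2] Dop_cmul[OF phi])
  also have "\<dots> = - (((if b = c then 1 else 0) - (if b = 0 then Pf c p else 0)) * Dop n d \<phi> p + Pf c p * Dop n b (Dop n d \<phi>) p
       + (if c = d then 1/2 else 0) * Dop n b \<phi> p)"
    by (simp only: Dop_Pf[OF polyV_Dop[OF phi] c])
  finally have D: "Dop n b (Rop n c d \<phi>) p = \<dots>" .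
  show ?thesis
    by (simp only: Rop_def[of n a b "Rop n c d \<phi>" p] D) (simp add: Rop_def algebra_simps)
qed

lemma Rop_comm:
  assumes phi: "polyV {..<n} \<phi>" and a: "a \<le> n" and b: "b \<le> n" and c: "c \<le> n" and d: "d \<le> n"
  shows "Rop n a b (Rop n c d \<phi>) p - Rop n c d (Rop n a b \<phi>) p =
     (if a = d then Rop n c b \<phi> p else 0) - (if b = c then Rop n a d \<phi> p else 0)"
proof -
  have D: "Dop n b (Dop n d \<phi>) p = Dop n d (Dop n b \<phi>) p + (if b = 0 then Dop n d \<phi> p else 0) - (if d = 0 then Dop n b \<phi> p else 0)"
    using Dop_comm[OF phi b d, of p] by (simp add: algebra_simps)
  show ?thesis
    unfolding Rop_Rop[OF phi c] Rop_Rop[OF phi a] D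
    by (cases "a = d"; cases "b = c"; cases "b = 0"; cases "d = 0"; simp add: Rop_def algebra_simps)
qed

lemma Rop_add: "polyV {..<n} f \<Longrightarrow> polyV {..<n} g \<Longrightarrow> Rop n a b (\<lambda>x. f x + g x) p = Rop n a b f p + Rop n a b g p"
  by (simp add: Rop_def Dop_add[of "{..<n}"] algebra_simps)

lemma Rop_cmul: "polyV {..<n} f \<Longrightarrow> Rop n a b (\<lambda>x. c * f x) p = c * Rop n a b f p"
  by (simp add: Rop_def Dop_cmul[of "{..<n}"] algebra_simps)

lemma Rop_sum: "finite I \<Longrightarrow> (\<And>i. i \<in> I \<Longrightarrow> polyV {..<n} (g i)) \<Longrightarrow> Rop n a b (\<lambda>x. \<Sum>i\<in>I. g i x) p = (\<Sum>i\<in>I. Rop n a b (g i) p)"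
proof (induction I rule: finite_induct)
  case empty then show ?case by (simp add: Rop_def Dop_def)
next
  case (insert i I)
  have "Rop n a b (\<lambda>x. \<Sum>i\<in>insert i I. g i x) p = Rop n a b (\<lambda>x. g i x + (\<Sum>i\<in>I. g i x)) p"
    using insert by simp
  also have "\<dots> = Rop n a b (g i) p + Rop n a b (\<lambda>x. \<Sum>i\<in>I. g i x) p"
    by (rule Rop_add) (use insert in \<open>auto intro: polyV_sum\<close>)
  finally show ?case using insert by simp
qed

lemma sum4_swap: "(\<Sum>c\<in>C. \<Sum>d\<in>D. \<Sum>a\<in>A. \<Sum>b\<in>B. f a b c d) = (\<Sum>a\<in>A. \<Sum>b\<in>B. \<Sum>c\<in>C. \<Sum>d\<in>D. f a b c d)"
proof -
  have "(\<Sum>c\<in>C. \<Sum>d\<in>D. \<Sum>a\<in>A. \<Sum>b\<in>B. f a b c d) = (\<Sum>c\<in>C. \<Sum>a\<in>A. \<Sum>d\<in>D. \<Sum>b\<in>B. f a b c d)"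
    by (rule sum.cong[OF refl], rule sum.swap)
  also have "\<dots> = (\<Sum>c\<in>C. \<Sum>a\<in>A. \<Sum>b\<in>B. \<Sum>d\<in>D. f a b c d)"
    by (rule sum.cong[OF refl], rule sum.cong[OF refl], rule sum.swap)
  also have "\<dots> = (\<Sum>a\<in>A. \<Sum>c\<in>C. \<Sum>b\<in>B. \<Sum>d\<in>D. f a b c d)"
    by (rule sum.swap)
  also have "\<dots> = (\<Sum>a\<in>A. \<Sum>b\<in>B. \<Sum>c\<in>C. \<Sum>d\<in>D. f a b c d)"
    by (rule sum.cong[OF refl], rule sum.swap)
  finally show ?thesis .
qed

lemma rho0_fun: "polyV {..<n} \<phi> \<Longrightarrow> rho0 n X \<phi> = (\<lambda>p. \<Sum>a\<le>n. \<Sum>b\<le>n. X $$ (b, a) * Rop n a b \<phi> p)"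
  by (rule ext) (rule rho0_Rop)

lemma polyV_rho0: "polyV {..<n} \<phi> \<Longrightarrow> polyV {..<n} (rho0 n X \<phi>)"
  by (simp only: rho0_fun) (intro polyV_sum polyV.pmul polyV.pc polyV_Rop; simp)

lemma rho0_rho0:
  assumes phi: "polyV {..<n} \<phi>"
  shows "rho0 n X (rho0 n Y \<phi>) p = (\<Sum>a\<le>n. \<Sum>b\<le>n. \<Sum>c\<le>n. \<Sum>d\<le>n. X $$ (b, a) * (Y $$ (d, c) * Rop n a b (Rop n c d \<phi>) p))"
proof -
  have pi: "polyV {..<n} (\<lambda>x. \<Sum>d\<le>n. Y $$ (d, c) * Rop n c d \<phi> x)" if "c \<le> n" for c
    using that by (intro polyV_sum polyV.pmul polyV.pc polyV_Rop phi) auto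
  have pj: "polyV {..<n} (\<lambda>x. Y $$ (d, c) * Rop n c d \<phi> x)" if "c \<le> n" for c d
    using that by (intro polyV.pmul polyV.pc polyV_Rop phi)
  have "rho0 n X (rho0 n Y \<phi>) p = (\<Sum>a\<le>n. \<Sum>b\<le>n. X $$ (b, a) * Rop n a b (rho0 n Y \<phi>) p)"
    by (rule rho0_Rop[OF polyV_rho0[OF phi]])
  also have "\<dots> = (\<Sum>a\<le>n. \<Sum>b\<le>n. X $$ (b, a) * Rop n a b (\<lambda>x. \<Sum>c\<le>n. \<Sum>d\<le>n. Y $$ (d, c) * Rop n c d \<phi> x) p)"
    by (simp only: rho0_fun[OF phi])
  also have "\<dots> = (\<Sum>a\<le>n. \<Sum>b\<le>n. X $$ (b, a) * (\<Sum>c\<le>n. \<Sum>d\<le>n. Y $$ (d, c) * Rop n a b (Rop n c d \<phi>) p))"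
  proof (intro sum.cong refl arg_cong[where f="\<lambda>t. X $$ (_, _) * t"])
    fix a b
    show "Rop n a b (\<lambda>x. \<Sum>c\<le>n. \<Sum>d\<le>n. Y $$ (d, c) * Rop n c d \<phi> x) p = (\<Sum>c\<le>n. \<Sum>d\<le>n. Y $$ (d, c) * Rop n a b (Rop n c d \<phi>) p)"
    proof -
      have "Rop n a b (\<lambda>x. \<Sum>c\<le>n. \<Sum>d\<le>n. Y $$ (d, c) * Rop n c d \<phi> x) p
          = (\<Sum>c\<le>n. Rop n a b (\<lambda>x. \<Sum>d\<le>n. Y $$ (d, c) * Rop n c d \<phi> x) p)"
        by (rule Rop_sum) (auto intro: pi)
      also have "\<dots> = (\<Sum>c\<le>n. \<Sum>d\<le>n. Rop n a b (\<lambda>x. Y $$ (d, c) * Rop n c d \<phi> x) p)"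
        by (intro sum.cong refl Rop_sum) (auto intro: pj)
      also have "\<dots> = (\<Sum>c\<le>n. \<Sum>d\<le>n. Y $$ (d, c) * Rop n a b (Rop n c d \<phi>) p)"
        by (intro sum.cong refl Rop_cmul polyV_Rop phi) auto
      finally show ?thesis .
    qed
  qed
  finally show ?thesis by (simp add: sum_distrib_left)
qed

theorem proposition6p1:
  fixes n :: nat
  assumes "n \<ge> 1"
  shows "(\<forall>X\<in>sl n. \<forall>Y\<in>sl n.
            moyal n (peval (tilde n X)) (peval (tilde n Y)) = poisson n (peval (tilde n X)) (peval (tilde n Y))
          \<and> poisson n (peval (tilde n X)) (peval (tilde n Y)) = peval (tilde n (X * Y - Y * X)))
       \<and> (\<forall>X\<in>sl n. \<forall>\<phi>\<in>Pspace n. rho0 n X \<phi> \<in> Pspace n)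
       \<and> (\<forall>X\<in>sl n. \<forall>Y\<in>sl n. \<forall>a b :: complex. \<forall>\<phi>\<in>Pspace n.
            rho0 n (a \<cdot>\<^sub>m X + b \<cdot>\<^sub>m Y) \<phi> = (\<lambda>p. a * rho0 n X \<phi> p + b * rho0 n Y \<phi> p))
       \<and> (\<forall>X\<in>sl n. \<forall>Y\<in>sl n. \<forall>\<phi>\<in>Pspace n.
            rho0 n (X * Y - Y * X) \<phi> = (\<lambda>p. rho0 n X (rho0 n Y \<phi>) p - rho0 n Y (rho0 n X \<phi>) p))"
proof (intro conjI ballI allI)
  fix X Y assume XS: "X \<in> sl n" and YS: "Y \<in> sl n"
  then have X: "X \<in> carrier_mat (n+1) (n+1)" and Y: "Y \<in> carrier_mat (n+1) (n+1)" by (auto simp: sl_def)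
  show "moyal n (peval (tilde n X)) (peval (tilde n Y)) = poisson n (peval (tilde n X)) (peval (tilde n Y))"
    unfolding peval_tilde by (rule ext) (rule moyal_TT)
  show "poisson n (peval (tilde n X)) (peval (tilde n Y)) = peval (tilde n (X * Y - Y * X))"
    unfolding peval_tilde
  proof (rule ext)
    fix x
    show "poisson n (TT n X) (TT n Y) x = TT n (X * Y - Y * X) x"
    proof -
      have "poisson n (TT n X) (TT n Y) x = (\<Sum>a\<le>n. \<Sum>b\<le>n. (\<Sum>c\<le>n. \<Sum>d\<le>n.
         ((if a = d then psi n c b x else 0) - (if b = c then psi n a d x else 0)) * Y $$ (d, c)) * X $$ (b, a))"
        by (rule poisson_TT)
      also have "\<dots> = (\<Sum>a\<le>n. \<Sum>b\<le>n. psi n a b x * (X * Y - Y * X) $$ (b, a))"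
        by (rule comb[OF X Y])
      also have "\<dots> = TT n (X * Y - Y * X) x" by (simp only: TT_def)
      finally show ?thesis .
    qed
  qed
next
  fix X \<phi> assume "X \<in> sl n" "\<phi> \<in> Pspace n"
  then have "polyV {..<n} \<phi>" by (intro Pspace_polyV)
  then show "rho0 n X \<phi> \<in> Pspace n"
    by (rule polyV_Pspace[OF polyV_rho0])
next
  fix X Y a b \<phi> assume XS: "X \<in> sl n" and YS: "Y \<in> sl n" and ph: "\<phi> \<in> Pspace n"
  then have X: "X \<in> carrier_mat (n+1) (n+1)" and Y: "Y \<in> carrier_mat (n+1) (n+1)" by (auto simp: sl_def)
  have phi: "polyV {..<n} \<phi>" using ph by (rule Pspace_polyV)
  show "rho0 n (a \<cdot>\<^sub>m X + b \<cdot>\<^sub>m Y) \<phi> = (\<lambda>p. a * rho0 n X \<phi> p + b * rho0 n Y \<phi> p)"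
  proof (rule ext)
    fix p
    have "rho0 n (a \<cdot>\<^sub>m X + b \<cdot>\<^sub>m Y) \<phi> p = (\<Sum>\<alpha>\<le>n. \<Sum>\<beta>\<le>n. (a \<cdot>\<^sub>m X + b \<cdot>\<^sub>m Y) $$ (\<beta>, \<alpha>) * Rop n \<alpha> \<beta> \<phi> p)"
      by (rule rho0_Rop[OF phi])
    also have "\<dots> = (\<Sum>\<alpha>\<le>n. \<Sum>\<beta>\<le>n. a * (X $$ (\<beta>, \<alpha>) * Rop n \<alpha> \<beta> \<phi> p) + b * (Y $$ (\<beta>, \<alpha>) * Rop n \<alpha> \<beta> \<phi> p))"
      using X Y by (intro sum.cong refl) (auto simp: algebra_simps)
    also have "\<dots> = a * rho0 n X \<phi> p + b * rho0 n Y \<phi> p"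
      by (simp add: rho0_Rop[OF phi] sum.distrib sum_distrib_left)
    finally show "rho0 n (a \<cdot>\<^sub>m X + b \<cdot>\<^sub>m Y) \<phi> p = a * rho0 n X \<phi> p + b * rho0 n Y \<phi> p" .
  qed
next
  fix X Y \<phi> assume XS: "X \<in> sl n" and YS: "Y \<in> sl n" and ph: "\<phi> \<in> Pspace n"
  then have X: "X \<in> carrier_mat (n+1) (n+1)" and Y: "Y \<in> carrier_mat (n+1) (n+1)" by (auto simp: sl_def)
  have phi: "polyV {..<n} \<phi>" using ph by (rule Pspace_polyV)
  show "rho0 n (X * Y - Y * X) \<phi> = (\<lambda>p. rho0 n X (rho0 n Y \<phi>) p - rho0 n Y (rho0 n X \<phi>) p)"
  proof (rule ext)
    fix p
    have r1: "rho0 n X (rho0 n Y \<phi>) p = (\<Sum>a\<le>n. \<Sum>b\<le>n. \<Sum>c\<le>n. \<Sum>d\<le>n. X $$ (b, a) * (Y $$ (d, c) * Rop n a b (Rop n c d \<phi>) p))"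
      by (rule rho0_rho0[OF phi])
    have "rho0 n Y (rho0 n X \<phi>) p = (\<Sum>c\<le>n. \<Sum>d\<le>n. \<Sum>a\<le>n. \<Sum>b\<le>n. X $$ (b, a) * (Y $$ (d, c) * Rop n c d (Rop n a b \<phi>) p))"
      using rho0_rho0[OF phi, of Y X p] by (simp add: mult_ac)
    also have "\<dots> = (\<Sum>a\<le>n. \<Sum>b\<le>n. \<Sum>c\<le>n. \<Sum>d\<le>n. X $$ (b, a) * (Y $$ (d, c) * Rop n c d (Rop n a b \<phi>) p))"
      by (rule sum4_swap)
    finally have r2: "rho0 n Y (rho0 n X \<phi>) p = \<dots>" .
    have "rho0 n X (rho0 n Y \<phi>) p - rho0 n Y (rho0 n X \<phi>) p =
      (\<Sum>a\<le>n. \<Sum>b\<le>n. \<Sum>c\<le>n. \<Sum>d\<le>n. X $$ (b, a) * (Y $$ (d, c) * (Rop n a b (Rop n c d \<phi>) p - Rop n c d (Rop n a b \<phi>) p)))"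
      unfolding r1 r2 by (simp add: sum_subtractf[symmetric] right_diff_distrib)
    also have "\<dots> = (\<Sum>a\<le>n. \<Sum>b\<le>n. \<Sum>c\<le>n. \<Sum>d\<le>n. X $$ (b, a) * (Y $$ (d, c) *
        ((if a = d then Rop n c b \<phi> p else 0) - (if b = c then Rop n a d \<phi> p else 0))))"
      by (intro sum.cong refl) (simp add: Rop_comm[OF phi])
    also have "\<dots> = (\<Sum>a\<le>n. \<Sum>b\<le>n. (\<Sum>c\<le>n. \<Sum>d\<le>n.
       ((if a = d then Rop n c b \<phi> p else 0) - (if b = c then Rop n a d \<phi> p else 0)) * Y $$ (d, c)) * X $$ (b, a))"
      by (simp add: sum_distrib_left sum_distrib_right mult_ac)
    also have "\<dots> = (\<Sum>a\<le>n. \<Sum>b\<le>n. Rop n a b \<phi> p * (X * Y - Y * X) $$ (b, a))"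
      by (rule comb[OF X Y])
    also have "\<dots> = rho0 n (X * Y - Y * X) \<phi> p"
      by (simp add: rho0_Rop[OF phi] mult.commute)
    finally show "rho0 n (X * Y - Y * X) \<phi> p = rho0 n X (rho0 n Y \<phi>) p - rho0 n Y (rho0 n X \<phi>) p" by simp
  qed
qed

end
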